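(* Let $P$ and $Q$ be irreducible transition matrices on the finite set $S$, both reversible with respect to $\pi$. If $P$ efficiency-dominates $Q$, then $P$ eigen-dominates $Q$.
   Context: $S$ is a finite set with $|S|=n$, and $\pi$ is a probability distribution on $S$ with $\pi(x)>0$ for all $x$. A transition matrix $P$ is reversible with respect to $\pi$ if $\pi(x)P(x,y)=\pi(y)P(y,x)$ for all $x,y$ (its eigenvalues are then real); irreducible if every state can be reached from every other with positive probability in some number of steps. For a Markov chain $X_1,X_2,\dots$ with transition matrix $P$ and $X_1\sim\pi$, $v(f,P)=\lim_{N\to\infty}\frac1N\mathrm{Var}\big(\sum_{i=1}^N f(X_i)\big)$. $P$ efficiency-dominates $Q$ if $v(f,P)\le v(f,Q)$ for all $f:S\to\mathbb R$. For reversible $P,Q$, $P$ eigen-dominates $Q$ if, writing the eigenvalues (with multiplicity) of $P$ as $\lambda_1\ge\dots\ge\lambda_n$ and those of $Q$ as $\beta_1\ge\dots\ge\beta_n$, we have $\lambda_i\le\beta_i$ for every $i$. *)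

theory Defs
  imports "Jordan_Normal_Form.Char_Poly" "HOL-Library.FuncSet"
begin

text \<open>The state space S is identified with {0..<n}; matrices are n x n real matrices.\<close>

definition prob_dist :: "nat \<Rightarrow> (nat \<Rightarrow> real) \<Rightarrow> bool" where
  "prob_dist n \<pi> \<longleftrightarrow> (\<forall>x<n. \<pi> x > 0) \<and> (\<Sum>x<n. \<pi> x) = 1"

definition transition_matrix :: "nat \<Rightarrow> real mat \<Rightarrow> bool" where
  "transition_matrix n P \<longleftrightarrow> P \<in> carrier_mat n n \<and>
     (\<forall>x<n. \<forall>y<n. P $$ (x,y) \<ge> 0) \<and> (\<forall>x<n. (\<Sum>y<n. P $$ (x,y)) = 1)"

definition reversible :: "nat \<Rightarrow> (nat \<Rightarrow> real) \<Rightarrow> real mat \<Rightarrow> bool" where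
  "reversible n \<pi> P \<longleftrightarrow> (\<forall>x<n. \<forall>y<n. \<pi> x * P $$ (x,y) = \<pi> y * P $$ (y,x))"

definition irreducible_mc :: "nat \<Rightarrow> real mat \<Rightarrow> bool" where
  "irreducible_mc n P \<longleftrightarrow> (\<forall>x<n. \<forall>y<n. \<exists>k. (P ^\<^sub>m k) $$ (x,y) > 0)"

text \<open>Law of the path (X_1,...,X_N) (indexed 0..N-1) of the chain started in \<pi>.\<close>
definition path_prob :: "(nat \<Rightarrow> real) \<Rightarrow> real mat \<Rightarrow> nat \<Rightarrow> (nat \<Rightarrow> nat) \<Rightarrow> real" where
  "path_prob \<pi> P N p = \<pi> (p 0) * (\<Prod>i<N - 1. P $$ (p i, p (Suc i)))"

definition path_expect :: "nat \<Rightarrow> (nat \<Rightarrow> real) \<Rightarrow> real mat \<Rightarrow> nat \<Rightarrow> ((nat \<Rightarrow> nat) \<Rightarrow> real) \<Rightarrow> real" where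
  "path_expect n \<pi> P N g = (\<Sum>p\<in>PiE {..<N} (\<lambda>_. {..<n}). path_prob \<pi> P N p * g p)"

definition var_sum :: "nat \<Rightarrow> (nat \<Rightarrow> real) \<Rightarrow> real mat \<Rightarrow> (nat \<Rightarrow> real) \<Rightarrow> nat \<Rightarrow> real" where
  "var_sum n \<pi> P f N =
     path_expect n \<pi> P N (\<lambda>p. (\<Sum>i<N. f (p i))^2) - (path_expect n \<pi> P N (\<lambda>p. \<Sum>i<N. f (p i)))^2"

definition asym_var :: "nat \<Rightarrow> (nat \<Rightarrow> real) \<Rightarrow> (nat \<Rightarrow> real) \<Rightarrow> real mat \<Rightarrow> real" where
  "asym_var n \<pi> f P = lim (\<lambda>N. var_sum n \<pi> P f N / real N)"

definition efficiency_dominates :: "nat \<Rightarrow> (nat \<Rightarrow> real) \<Rightarrow> real mat \<Rightarrow> real mat \<Rightarrow> bool" where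
  "efficiency_dominates n \<pi> P Q \<longleftrightarrow> (\<forall>f. asym_var n \<pi> f P \<le> asym_var n \<pi> f Q)"

definition sorted_eigenvalues :: "real mat \<Rightarrow> real list \<Rightarrow> bool" where
  "sorted_eigenvalues A ls \<longleftrightarrow> length ls = dim_row A \<and> sorted_wrt (\<ge>) ls \<and>
     char_poly A = (\<Prod>a\<leftarrow>ls. [:-a, 1:])"

definition eigen_dominates :: "real mat \<Rightarrow> real mat \<Rightarrow> bool" where
  "eigen_dominates P Q \<longleftrightarrow> (\<exists>lp lq. sorted_eigenvalues P lp \<and> sorted_eigenvalues Q lq \<and>
     (\<forall>i<length lp. lp ! i \<le> lq ! i))"

end

theory Submission
  imports Defs
begin

definition ip :: "nat \<Rightarrow> (nat \<Rightarrow> real) \<Rightarrow> (nat \<Rightarrow> real) \<Rightarrow> (nat \<Rightarrow> real) \<Rightarrow> real" where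
  "ip n w u v = (\<Sum>x<n. w x * u x * v x)"

definition orthonormal :: "nat \<Rightarrow> (nat \<Rightarrow> real) \<Rightarrow> (nat \<Rightarrow> nat \<Rightarrow> real) \<Rightarrow> nat \<Rightarrow> bool" where
  "orthonormal n w \<phi> K \<longleftrightarrow> (\<forall>k<K. \<forall>l<K. ip n w (\<phi> k) (\<phi> l) = (if k = l then 1 else 0))"

lemma ip_sym: "ip n w u v = ip n w v u"
  unfolding ip_def by (simp add: mult_ac)

lemma ip_cong: "(\<And>x. x < n \<Longrightarrow> u x = u' x) \<Longrightarrow> (\<And>x. x < n \<Longrightarrow> v x = v' x) \<Longrightarrow> ip n w u v = ip n w u' v'"
  unfolding ip_def by (rule sum.cong) auto

lemma ip_sum_right: "ip n w a (\<lambda>x. \<Sum>j\<in>J. c j * V j x) = (\<Sum>j\<in>J. c j * ip n w a (V j))"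
proof -
  have "ip n w a (\<lambda>x. \<Sum>j\<in>J. c j * V j x) = (\<Sum>x<n. \<Sum>j\<in>J. c j * (w x * a x * V j x))"
    unfolding ip_def by (simp add: sum_distrib_left mult_ac)
  also have "\<dots> = (\<Sum>j\<in>J. \<Sum>x<n. c j * (w x * a x * V j x))" by (rule sum.swap)
  also have "\<dots> = (\<Sum>j\<in>J. c j * ip n w a (V j))" unfolding ip_def by (simp add: sum_distrib_left)
  finally show ?thesis .
qed

lemma ip_sum_left: "ip n w (\<lambda>x. \<Sum>j\<in>J. c j * V j x) a = (\<Sum>j\<in>J. c j * ip n w (V j) a)"
proof -
  have "ip n w (\<lambda>x. \<Sum>j\<in>J. c j * V j x) a = ip n w a (\<lambda>x. \<Sum>j\<in>J. c j * V j x)" by (rule ip_sym)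
  also have "\<dots> = (\<Sum>j\<in>J. c j * ip n w a (V j))" by (rule ip_sum_right)
  also have "\<dots> = (\<Sum>j\<in>J. c j * ip n w (V j) a)" by (simp add: ip_sym)
  finally show ?thesis .
qed

lemma ip_diff_right: "ip n w a (\<lambda>x. u x - v x) = ip n w a u - ip n w a v"
  unfolding ip_def by (simp add: algebra_simps sum_subtractf)

lemma ip_scale_right: "ip n w a (\<lambda>x. s * u x) = s * ip n w a u"
  unfolding ip_def by (simp add: algebra_simps sum_distrib_left)

lemma ip_scale_left: "ip n w (\<lambda>x. s * u x) a = s * ip n w u a"
  unfolding ip_def by (simp add: algebra_simps sum_distrib_left)

lemma ip_pos:
  assumes "\<forall>x<n. w x > 0" "z < n" "u z \<noteq> 0"
  shows "ip n w u u > 0"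
  unfolding ip_def
proof (rule sum_pos2[of _ z])
  have "0 < u z * u z" using assms(3) by (metis not_real_square_gt_zero)
  then show "0 < w z * u z * u z" using assms by (simp add: mult.assoc)
next
  fix i assume "i \<in> {..<n}"
  then have "0 \<le> w i" using assms by auto
  then show "0 \<le> w i * u i * u i" by (simp add: mult.assoc)
qed (use assms in auto)

lemma ip_nonneg:
  assumes "\<forall>x<n. w x > 0"
  shows "ip n w u u \<ge> 0"
  unfolding ip_def
proof (rule sum_nonneg)
  fix i assume "i \<in> {..<n}"
  then have "0 \<le> w i" using assms by auto
  then show "0 \<le> w i * u i * u i" by (simp add: mult.assoc)
qed

lemma ip_zero_iff:
  assumes "\<forall>x<n. w x > 0"
  shows "ip n w u u = 0 \<longleftrightarrow> (\<forall>x<n. u x = 0)"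
proof
  assume "ip n w u u = 0" then show "\<forall>x<n. u x = 0" using ip_pos[OF assms] by force
next
  assume "\<forall>x<n. u x = 0" then show "ip n w u u = 0" unfolding ip_def by simp
qed

lemma lin_dep_fun:
  fixes v :: "nat \<Rightarrow> nat \<Rightarrow> real"
  assumes "finite J" "card J > n"
  shows "\<exists>c. (\<exists>j\<in>J. c j \<noteq> 0) \<and> (\<forall>x<n. (\<Sum>j\<in>J. c j * v j x) = 0)"
  using assms
proof (induction n arbitrary: J v)
  case 0
  then obtain j where "j \<in> J" by fastforce
  then show ?case by (intro exI[of _ "\<lambda>_. 1"]) auto
next
  case (Suc n)
  show ?case
  proof (cases "\<forall>j\<in>J. v j n = 0")
    case True
    from Suc.IH[of J v] Suc.prems obtain c where c: "\<exists>j\<in>J. c j \<noteq> 0" "\<forall>x<n. (\<Sum>j\<in>J. c j * v j x) = 0" by auto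
    have "\<forall>x<Suc n. (\<Sum>j\<in>J. c j * v j x) = 0"
    proof (intro allI impI)
      fix x assume "x < Suc n"
      then consider "x < n" | "x = n" by linarith
      then show "(\<Sum>j\<in>J. c j * v j x) = 0" using c True by cases auto
    qed
    with c show ?thesis by blast
  next
    case False
    then obtain j0 where j0: "j0 \<in> J" "v j0 n \<noteq> 0" by auto
    define J' where "J' = J - {j0}"
    define w where "w = (\<lambda>j x. v j x - (v j n / v j0 n) * v j0 x)"
    have fJ': "finite J'" "card J' > n" using Suc.prems j0 by (auto simp: J'_def)
    from Suc.IH[OF fJ', of w] obtain c' where c': "\<exists>j\<in>J'. c' j \<noteq> 0" "\<forall>x<n. (\<Sum>j\<in>J'. c' j * w j x) = 0" by auto
    define c where "c = (\<lambda>j. if j = j0 then - (\<Sum>j\<in>J'. c' j * v j n) / v j0 n else c' j)"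
    have key: "(\<Sum>j\<in>J. c j * v j x) = (\<Sum>j\<in>J'. c' j * w j x)" for x
    proof -
      have "(\<Sum>j\<in>J. c j * v j x) = c j0 * v j0 x + (\<Sum>j\<in>J'. c j * v j x)"
        using j0 Suc.prems(1) unfolding J'_def by (simp add: sum.remove)
      also have "(\<Sum>j\<in>J'. c j * v j x) = (\<Sum>j\<in>J'. c' j * v j x)" by (rule sum.cong) (auto simp: c_def J'_def)
      also have "(\<Sum>j\<in>J'. c' j * w j x) = (\<Sum>j\<in>J'. c' j * v j x) - (\<Sum>j\<in>J'. c' j * v j n) / v j0 n * v j0 x"
      proof -
        have "(\<Sum>j\<in>J'. c' j * w j x) = (\<Sum>j\<in>J'. c' j * v j x - (c' j * v j n / v j0 n) * v j0 x)"
          unfolding w_def by (rule sum.cong) (auto simp: algebra_simps)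
        also have "\<dots> = (\<Sum>j\<in>J'. c' j * v j x) - (\<Sum>j\<in>J'. c' j * v j n / v j0 n) * v j0 x"
          by (simp add: sum_subtractf sum_distrib_right)
        also have "(\<Sum>j\<in>J'. c' j * v j n / v j0 n) = (\<Sum>j\<in>J'. c' j * v j n) / v j0 n"
          by (simp add: sum_divide_distrib)
        finally show ?thesis .
      qed
      ultimately show ?thesis by (simp add: c_def)
    qed
    have "\<forall>x<Suc n. (\<Sum>j\<in>J. c j * v j x) = 0"
    proof (intro allI impI)
      fix x assume "x < Suc n"
      then consider "x < n" | "x = n" by linarith
      then show "(\<Sum>j\<in>J. c j * v j x) = 0" 
      proof cases
        case 1 then show ?thesis using key c' by auto
      next
        case 2 then show ?thesis unfolding key using j0 by (simp add: w_def)
      qed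
    qed
    moreover have "\<exists>j\<in>J. c j \<noteq> 0" using c' by (auto simp: c_def J'_def)
    ultimately show ?thesis by blast
  qed
qed

lemma orth_exists:
  assumes w: "\<forall>x<n. w x > 0" and k: "k < n"
  shows "\<exists>u. ip n w u u = 1 \<and> (\<forall>l<k. ip n w (\<phi> l) u = 0)"
proof -
  from lin_dep_fun[of "{..<n}" k "\<lambda>z l. w z * \<phi> l z"] k
  obtain c where c: "\<exists>j<n. c j \<noteq> 0" "\<forall>l<k. (\<Sum>z<n. c z * (w z * \<phi> l z)) = 0" by auto
  have ortho: "ip n w (\<phi> l) c = 0" if "l < k" for l
    using c(2) that unfolding ip_def by (simp add: mult_ac)
  define s where "s = ip n w c c"
  have s: "s > 0" using c(1) ip_pos[OF w] unfolding s_def by auto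
  define u where "u = (\<lambda>x. (1 / sqrt s) * c x)"
  have "ip n w u u = (1 / sqrt s) * ((1 / sqrt s) * s)"
    unfolding u_def ip_scale_left ip_scale_right s_def ..
  also have "\<dots> = 1" using s by (simp add: field_simps)
  finally have "ip n w u u = 1" .
  moreover have "\<forall>l<k. ip n w (\<phi> l) u = 0" unfolding u_def ip_scale_right using ortho by simp
  ultimately show ?thesis by blast
qed

lemma orth_complete:
  assumes w: "\<forall>x<n. w x > 0" and "orthonormal n w \<phi> K" "K \<le> n"
  shows "\<exists>\<psi>. orthonormal n w \<psi> n \<and> (\<forall>j<K. \<psi> j = \<phi> j)"
  using assms(2,3)
proof (induction "n - K" arbitrary: K \<phi>)
  case 0
  then have "K = n" by simp
  with 0 show ?case by blast
next
  case (Suc m)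
  then have K: "K < n" by simp
  from orth_exists[OF w K, of \<phi>] obtain u where u: "ip n w u u = 1" "\<forall>l<K. ip n w (\<phi> l) u = 0" by blast
  define \<phi>' where "\<phi>' = \<phi>(K := u)"
  have "orthonormal n w \<phi>' (Suc K)"
    unfolding orthonormal_def
  proof (intro allI impI)
    fix k l assume "k < Suc K" "l < Suc K"
    then show "ip n w (\<phi>' k) (\<phi>' l) = (if k = l then 1 else 0)"
      using Suc.prems(1) u unfolding orthonormal_def \<phi>'_def
      by (cases "k = K"; cases "l = K") (auto simp: ip_sym)
  qed
  have "m = n - Suc K" using Suc.hyps(2) by arith
  from Suc.hyps(1)[OF this \<open>orthonormal n w \<phi>' (Suc K)\<close>] K obtain \<psi> where
    "orthonormal n w \<psi> n" "\<forall>j<Suc K. \<psi> j = \<phi>' j" by auto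
  then show ?case unfolding \<phi>'_def by auto
qed

lemma orth_expand:
  assumes w: "\<forall>x<n. w x > 0" and on: "orthonormal n w \<psi> n" and x: "x < n"
  shows "u x = (\<Sum>j<n. ip n w (\<psi> j) u * \<psi> j x)"
proof -
  define r where "r = (\<lambda>x. u x - (\<Sum>j<n. ip n w (\<psi> j) u * \<psi> j x))"
  have rorth: "ip n w (\<psi> l) r = 0" if l: "l < n" for l
  proof -
    have "ip n w (\<psi> l) r = ip n w (\<psi> l) u - (\<Sum>j<n. ip n w (\<psi> j) u * ip n w (\<psi> l) (\<psi> j))"
      unfolding r_def ip_diff_right ip_sum_right ..
    also have "(\<Sum>j<n. ip n w (\<psi> j) u * ip n w (\<psi> l) (\<psi> j)) = (\<Sum>j<n. if j = l then ip n w (\<psi> j) u else 0)"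
      by (rule sum.cong) (use on l in \<open>auto simp: orthonormal_def\<close>)
    also have "\<dots> = ip n w (\<psi> l) u" using l by simp
    finally show ?thesis by simp
  qed
  define V where "V = (\<lambda>j. if j < n then \<psi> j else r)"
  from lin_dep_fun[of "{..<Suc n}" n V] obtain c where
    c: "\<exists>j<Suc n. c j \<noteq> 0" "\<forall>x<n. (\<Sum>j<Suc n. c j * V j x) = 0" by auto
  have cl: "c l = 0" if l: "l < n" for l
  proof -
    have "0 = ip n w (\<psi> l) (\<lambda>x. \<Sum>j<Suc n. c j * V j x)"
      using c(2) unfolding ip_def by simp
    also have "\<dots> = (\<Sum>j<Suc n. c j * ip n w (\<psi> l) (V j))" by (rule ip_sum_right)
    also have "\<dots> = (\<Sum>j<Suc n. if j = l then c j else 0)"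
      by (rule sum.cong) (use on l rorth in \<open>auto simp: orthonormal_def V_def\<close>)
    also have "\<dots> = c l" using l by simp
    finally show ?thesis by simp
  qed
  then have cn: "c n \<noteq> 0" using c(1) by (metis less_Suc_eq)
  have "c n * r x = 0"
  proof -
    have "(\<Sum>j<Suc n. c j * V j x) = c n * r x" using cl by (simp add: V_def)
    then show ?thesis using c(2) x by simp
  qed
  with cn have "r x = 0" by simp
  then show ?thesis unfolding r_def by simp
qed

lemma sym_real_eigen:
  fixes C :: "nat \<Rightarrow> nat \<Rightarrow> real"
  assumes m: "m > 0" and sym: "\<forall>a<m. \<forall>b<m. C a b = C b a"
  shows "\<exists>lam y. (\<exists>a<m. y a \<noteq> 0) \<and> (\<forall>a<m. (\<Sum>b<m. C a b * y b) = lam * y a)"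
proof -
  define Cc :: "complex mat" where "Cc = mat m m (\<lambda>(a,b). complex_of_real (C a b))"
  have Cc: "Cc \<in> carrier_mat m m" unfolding Cc_def by simp
  from char_poly_factorized[OF Cc] obtain as where
    as: "char_poly Cc = (\<Prod>a\<leftarrow>as. [:-a,1:])" "length as = m" by blast
  then have "as \<noteq> []" using m by auto
  then obtain z where z: "z \<in> set as" by (cases as) auto
  have "poly (char_poly Cc) z = 0"
    unfolding as(1) poly_prod_list prod_list_zero_iff using z by force
  then have "eigenvalue Cc z" using eigenvalue_root_char_poly[OF Cc] by simp
  then obtain v where "eigenvector Cc v z" unfolding eigenvalue_def by blast
  then have v: "v \<in> carrier_vec m" "v \<noteq> 0\<^sub>v m" "Cc *\<^sub>v v = z \<cdot>\<^sub>v v"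
    unfolding eigenvector_def using Cc by auto
  have eq: "(\<Sum>b<m. complex_of_real (C a b) * v $ b) = z * v $ a" if a: "a < m" for a
  proof -
    have "(Cc *\<^sub>v v) $ a = (z \<cdot>\<^sub>v v) $ a" using v(3) by simp
    then show ?thesis using a v(1) Cc
      by (simp add: Cc_def scalar_prod_def atLeast0LessThan)
  qed
  define X where "X = (\<lambda>b. Re (v $ b))"
  define Y where "Y = (\<lambda>b. Im (v $ b))"
  define \<alpha> where "\<alpha> = Re z"
  define \<beta> where "\<beta> = Im z"
  have eqX: "(\<Sum>b<m. C a b * X b) = \<alpha> * X a - \<beta> * Y a" if a: "a < m" for a
    using arg_cong[OF eq[OF a], of Re] by (simp add: Re_sum X_def Y_def \<alpha>_def \<beta>_def)
  have eqY: "(\<Sum>b<m. C a b * Y b) = \<beta> * X a + \<alpha> * Y a" if a: "a < m" for a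
    using arg_cong[OF eq[OF a], of Im] by (simp add: Im_sum X_def Y_def \<alpha>_def \<beta>_def)
  have bil: "(\<Sum>a<m. Y a * (\<Sum>b<m. C a b * X b)) = (\<Sum>a<m. X a * (\<Sum>b<m. C a b * Y b))"
  proof -
    have "(\<Sum>a<m. Y a * (\<Sum>b<m. C a b * X b)) = (\<Sum>a<m. \<Sum>b<m. Y a * C a b * X b)"
      by (simp add: sum_distrib_left mult_ac)
    also have "\<dots> = (\<Sum>b<m. \<Sum>a<m. Y a * C a b * X b)" by (rule sum.swap)
    also have "\<dots> = (\<Sum>b<m. \<Sum>a<m. X b * C b a * Y a)"
      using sym by (intro sum.cong refl) (auto simp: mult_ac)
    also have "\<dots> = (\<Sum>a<m. X a * (\<Sum>b<m. C a b * Y b))"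
      by (simp add: sum_distrib_left mult_ac)
    finally show ?thesis .
  qed
  have "(\<Sum>a<m. Y a * (\<alpha> * X a - \<beta> * Y a)) = (\<Sum>a<m. X a * (\<beta> * X a + \<alpha> * Y a))"
    using bil eqX eqY by simp
  then have "(\<Sum>a<m. \<alpha> * (X a * Y a) - \<beta> * (Y a * Y a)) = (\<Sum>a<m. \<beta> * (X a * X a) + \<alpha> * (X a * Y a))"
    by (simp add: algebra_simps)
  then have "\<alpha> * (\<Sum>a<m. X a * Y a) - \<beta> * (\<Sum>a<m. Y a * Y a) = \<beta> * (\<Sum>a<m. X a * X a) + \<alpha> * (\<Sum>a<m. X a * Y a)"
    by (simp add: sum_subtractf sum.distrib sum_distrib_left)
  then have beq: "\<beta> * ((\<Sum>a<m. X a * X a) + (\<Sum>a<m. Y a * Y a)) = 0"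
    by (simp add: algebra_simps)
  from v(1,2) obtain a0 where a0: "a0 < m" "v $ a0 \<noteq> 0"
    by (metis carrier_vecD eq_vecI index_zero_vec(1) index_zero_vec(2))
  then have "X a0 \<noteq> 0 \<or> Y a0 \<noteq> 0" unfolding X_def Y_def using complex_eqI by force
  have pos: "(\<Sum>a<m. X a * X a) + (\<Sum>a<m. Y a * Y a) > 0"
  proof -
    have "X a0 * X a0 + Y a0 * Y a0 > 0" using \<open>X a0 \<noteq> 0 \<or> Y a0 \<noteq> 0\<close>
      by (metis add_pos_nonneg add_nonneg_pos not_real_square_gt_zero zero_le_square)
    also have "X a0 * X a0 + Y a0 * Y a0 \<le> (\<Sum>a<m. X a * X a + Y a * Y a)"
      using a0 by (intro member_le_sum) auto
    finally show ?thesis by (simp add: sum.distrib)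
  qed
  with beq have b0: "\<beta> = 0" by simp
  show ?thesis
  proof (cases "X a0 \<noteq> 0")
    case True
    then show ?thesis using eqX b0 a0 by (intro exI[of _ \<alpha>] exI[of _ X]) auto
  next
    case False
    then have "Y a0 \<noteq> 0" using \<open>X a0 \<noteq> 0 \<or> Y a0 \<noteq> 0\<close> by simp
    then show ?thesis using eqY b0 a0 by (intro exI[of _ \<alpha>] exI[of _ Y]) auto
  qed
qed

definition mop :: "nat \<Rightarrow> (nat \<Rightarrow> nat \<Rightarrow> real) \<Rightarrow> (nat \<Rightarrow> real) \<Rightarrow> nat \<Rightarrow> real" where
  "mop n M u = (\<lambda>x. \<Sum>y<n. M x y * u y)"

lemma mop_sum: "mop n M (\<lambda>x. \<Sum>b\<in>B. c b * V b x) x = (\<Sum>b\<in>B. c b * mop n M (V b) x)"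
proof -
  have "mop n M (\<lambda>x. \<Sum>b\<in>B. c b * V b x) x = (\<Sum>y<n. \<Sum>b\<in>B. c b * (M x y * V b y))"
    unfolding mop_def by (simp add: sum_distrib_left mult_ac)
  also have "\<dots> = (\<Sum>b\<in>B. \<Sum>y<n. c b * (M x y * V b y))" by (rule sum.swap)
  also have "\<dots> = (\<Sum>b\<in>B. c b * mop n M (V b) x)" unfolding mop_def by (simp add: sum_distrib_left)
  finally show ?thesis .
qed

lemma mop_scale: "mop n M (\<lambda>x. s * u x) x = s * mop n M u x"
  unfolding mop_def by (simp add: sum_distrib_left mult_ac)

lemma mop_cong: "(\<And>y. y < n \<Longrightarrow> u y = v y) \<Longrightarrow> mop n M u x = mop n M v x"
  unfolding mop_def by (rule sum.cong) auto

lemma ip_mop: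
  assumes sa: "\<forall>x<n. \<forall>y<n. w x * M x y = w y * M y x"
  shows "ip n w (mop n M u) v = ip n w u (mop n M v)"
proof -
  have "ip n w (mop n M u) v = (\<Sum>x<n. \<Sum>y<n. (w x * M x y) * u y * v x)"
    unfolding ip_def mop_def by (simp add: sum_distrib_left sum_distrib_right mult_ac)
  also have "\<dots> = (\<Sum>x<n. \<Sum>y<n. (w y * M y x) * u y * v x)"
    using sa by (intro sum.cong refl) auto
  also have "\<dots> = (\<Sum>y<n. \<Sum>x<n. (w y * M y x) * u y * v x)" by (rule sum.swap)
  also have "\<dots> = ip n w u (mop n M v)"
    unfolding ip_def mop_def by (simp add: sum_distrib_left sum_distrib_right mult_ac)
  finally show ?thesis .
qed

lemma sum_split_add: "(\<Sum>j<K+m. f j) = (\<Sum>j<K. f j) + (\<Sum>a<m. f (K+a::nat))"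
  by (induction m) (auto simp: add.assoc)

lemma spectral_step:
  assumes w: "\<forall>x<n. w x > 0" and sa: "\<forall>x<n. \<forall>y<n. w x * M x y = w y * M y x"
    and on: "orthonormal n w \<phi> K" and K: "K < n"
    and ev: "\<forall>k<K. \<forall>x<n. mop n M (\<phi> k) x = d k * \<phi> k x"
  shows "\<exists>u lam. ip n w u u = 1 \<and> (\<forall>j<K. ip n w (\<phi> j) u = 0) \<and> (\<forall>x<n. mop n M u x = lam * u x)"
proof -
  from orth_complete[OF w on] K obtain \<psi> where
    \<psi>: "orthonormal n w \<psi> n" "\<forall>j<K. \<psi> j = \<phi> j" by auto
  define m where "m = n - K"
  have m: "m > 0" "n = K + m" using K by (auto simp: m_def)
  have \<psi>o: "ip n w (\<psi> i) (\<psi> j) = (if i = j then 1 else 0)" if "i < n" "j < n" for i j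
    using \<psi>(1) that unfolding orthonormal_def by auto
  define C where "C = (\<lambda>a b. ip n w (\<psi> (K+a)) (mop n M (\<psi> (K+b))))"
  have Csym: "\<forall>a<m. \<forall>b<m. C a b = C b a"
    unfolding C_def by (metis ip_mop[OF sa] ip_sym)
  from sym_real_eigen[OF m(1) Csym] obtain lam y where
    y: "\<exists>a<m. y a \<noteq> 0" "\<forall>a<m. (\<Sum>b<m. C a b * y b) = lam * y a" by blast
  define u where "u = (\<lambda>x. \<Sum>a<m. y a * \<psi> (K+a) x)"
  have ipu: "ip n w (\<psi> j) u = (if j < K then 0 else y (j - K))" if j: "j < n" for j
  proof -
    have "ip n w (\<psi> j) u = (\<Sum>a<m. y a * ip n w (\<psi> j) (\<psi> (K+a)))"
      unfolding u_def by (rule ip_sum_right)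
    also have "\<dots> = (\<Sum>a<m. if a = j - K \<and> K \<le> j then y a else 0)"
    proof (rule sum.cong[OF refl])
      fix a assume "a \<in> {..<m}"
      then have "K + a < n" using m(2) by simp
      then show "y a * ip n w (\<psi> j) (\<psi> (K+a)) = (if a = j - K \<and> K \<le> j then y a else 0)"
        using \<psi>o[OF j \<open>K + a < n\<close>] by auto
    qed
    also have "\<dots> = (if j < K then 0 else y (j - K))"
      using j m by auto
    finally show ?thesis .
  qed
  have uu: "ip n w u u = (\<Sum>a<m. y a * y a)"
  proof -
    have "ip n w u u = (\<Sum>a<m. y a * ip n w (\<psi> (K+a)) u)"
      using ip_sum_left[where J="{..<m}" and c=y and V="\<lambda>a. \<psi> (K+a)" and a=u and n=n and w=w]
      by (simp add: u_def[symmetric])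
    also have "\<dots> = (\<Sum>a<m. y a * y a)"
    proof (rule sum.cong[OF refl])
      fix a assume "a \<in> {..<m}"
      then have "K + a < n" using m(2) by simp
      then show "y a * ip n w (\<psi> (K+a)) u = y a * y a" using ipu[OF \<open>K + a < n\<close>] by simp
    qed
    finally show ?thesis .
  qed
  have upos: "ip n w u u > 0"
  proof -
    from y(1) obtain a where a: "a < m" "y a \<noteq> 0" by blast
    have "0 < y a * y a" using a(2) by (metis not_real_square_gt_zero)
    also have "\<dots> \<le> (\<Sum>a<m. y a * y a)" using a(1) by (intro member_le_sum) auto
    finally show ?thesis using uu by simp
  qed
  have Mu: "mop n M u x = lam * u x" if x: "x < n" for x
  proof -
    have "mop n M u x = (\<Sum>j<n. ip n w (\<psi> j) (mop n M u) * \<psi> j x)"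
      by (rule orth_expand[OF w \<psi>(1) x])
    also have "\<dots> = (\<Sum>j<K. ip n w (\<psi> j) (mop n M u) * \<psi> j x) + (\<Sum>a<m. ip n w (\<psi> (K+a)) (mop n M u) * \<psi> (K+a) x)"
      unfolding m(2) by (rule sum_split_add)
    also have "(\<Sum>j<K. ip n w (\<psi> j) (mop n M u) * \<psi> j x) = 0"
    proof (rule sum.neutral, intro ballI)
      fix j assume "j \<in> {..<K}"
      then have j: "j < K" by simp
      have "ip n w (\<psi> j) (mop n M u) = ip n w (mop n M (\<psi> j)) u" by (simp add: ip_mop[OF sa])
      also have "\<dots> = ip n w (\<lambda>x. d j * \<psi> j x) u"
        using ev j \<psi>(2) by (intro ip_cong) auto
      also have "\<dots> = 0" using ipu[of j] j K by (simp add: ip_scale_left)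
      finally show "ip n w (\<psi> j) (mop n M u) * \<psi> j x = 0" by simp
    qed
    also have "(\<Sum>a<m. ip n w (\<psi> (K+a)) (mop n M u) * \<psi> (K+a) x) = (\<Sum>a<m. lam * y a * \<psi> (K+a) x)"
    proof (rule sum.cong[OF refl])
      fix a assume "a \<in> {..<m}"
      then have a: "a < m" by simp
      have "ip n w (\<psi> (K+a)) (mop n M u) = ip n w (\<psi> (K+a)) (\<lambda>x. \<Sum>b<m. y b * mop n M (\<psi> (K+b)) x)"
        unfolding u_def by (intro ip_cong refl) (rule mop_sum)
      also have "\<dots> = (\<Sum>b<m. y b * C a b)" unfolding ip_sum_right C_def ..
      also have "\<dots> = lam * y a" using y(2) a by (simp add: mult_ac)
      finally show "ip n w (\<psi> (K+a)) (mop n M u) * \<psi> (K+a) x = lam * y a * \<psi> (K+a) x" by simp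
    qed
    also have "\<dots> = lam * u x" unfolding u_def by (simp add: sum_distrib_left mult_ac)
    finally show ?thesis by simp
  qed
  define u' where "u' = (\<lambda>x. (1 / sqrt (ip n w u u)) * u x)"
  have "ip n w u' u' = (1 / sqrt (ip n w u u)) * ((1 / sqrt (ip n w u u)) * ip n w u u)"
    unfolding u'_def ip_scale_left ip_scale_right ..
  also have "\<dots> = 1" using upos by (simp add: field_simps)
  finally have "ip n w u' u' = 1" .
  moreover have "\<forall>j<K. ip n w (\<phi> j) u' = 0"
  proof (intro allI impI)
    fix j assume j: "j < K"
    then have "ip n w (\<psi> j) u = 0" using ipu[of j] K by simp
    then show "ip n w (\<phi> j) u' = 0" using \<psi>(2) j unfolding u'_def ip_scale_right by simp
  qed
  moreover have "\<forall>x<n. mop n M u' x = lam * u' x"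
    unfolding u'_def mop_scale using Mu by simp
  ultimately show ?thesis by blast
qed

lemma spectral_aux:
  assumes w: "\<forall>x<n. w x > 0" and sa: "\<forall>x<n. \<forall>y<n. w x * M x y = w y * M y x"
    and K: "K \<le> n"
  shows "\<exists>\<phi> d. orthonormal n w \<phi> K \<and> (\<forall>k<K. \<forall>x<n. mop n M (\<phi> k) x = d k * \<phi> k x)"
  using K
proof (induction K)
  case 0
  then show ?case by (auto simp: orthonormal_def)
next
  case (Suc K)
  then obtain \<phi> d where on: "orthonormal n w \<phi> K" and ev: "\<forall>k<K. \<forall>x<n. mop n M (\<phi> k) x = d k * \<phi> k x"
    by auto
  from spectral_step[OF w sa on _ ev] Suc.prems obtain u lam where
    u: "ip n w u u = 1" "\<forall>j<K. ip n w (\<phi> j) u = 0" "\<forall>x<n. mop n M u x = lam * u x" by auto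
  define \<phi>' where "\<phi>' = \<phi>(K := u)"
  define d' where "d' = d(K := lam)"
  have "orthonormal n w \<phi>' (Suc K)"
    unfolding orthonormal_def
  proof (intro allI impI)
    fix k l assume "k < Suc K" "l < Suc K"
    then show "ip n w (\<phi>' k) (\<phi>' l) = (if k = l then 1 else 0)"
      using on u unfolding orthonormal_def \<phi>'_def
      by (cases "k = K"; cases "l = K") (auto simp: ip_sym)
  qed
  moreover have "\<forall>k<Suc K. \<forall>x<n. mop n M (\<phi>' k) x = d' k * \<phi>' k x"
    using ev u unfolding \<phi>'_def d'_def by (auto simp: less_Suc_eq)
  ultimately show ?case by blast
qed

lemma spectral:
  assumes w: "\<forall>x<n. w x > 0" and sa: "\<forall>x<n. \<forall>y<n. w x * M x y = w y * M y x"
  shows "\<exists>\<phi> d. orthonormal n w \<phi> n \<and> (\<forall>k<n. \<forall>x<n. mop n M (\<phi> k) x = d k * \<phi> k x)"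
  using spectral_aux[OF w sa le_refl] .

lemma spectral_sorted:
  assumes w: "\<forall>x<n. w x > 0" and sa: "\<forall>x<n. \<forall>y<n. w x * M x y = w y * M y x"
  shows "\<exists>\<phi> d. orthonormal n w \<phi> n \<and> (\<forall>k<n. \<forall>x<n. mop n M (\<phi> k) x = d k * \<phi> k x)
     \<and> (\<forall>i j. i \<le> j \<longrightarrow> j < n \<longrightarrow> d j \<le> d i)"
proof -
  from spectral[OF w sa] obtain \<phi> d where
    on: "orthonormal n w \<phi> n" and ev: "\<forall>k<n. \<forall>x<n. mop n M (\<phi> k) x = d k * \<phi> k x" by blast
  define xs where "xs = map d [0..<n]"
  define ls where "ls = rev (sort xs)"
  have "mset ls = mset xs" unfolding ls_def by simp
  from mset_eq_permutation[OF this] obtain p where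
    p: "p permutes {..<length xs}" "permute_list p xs = ls" by blast
  have lenx: "length xs = n" unfolding xs_def by simp
  have pn: "p k < n" if "k < n" for k using p(1) that lenx by (metis lessThan_iff permutes_in_image)
  have pinj: "p k = p l \<longleftrightarrow> k = l" for k l using p(1) by (meson permutes_inj injD)
  have lsi: "ls ! i = d (p i)" if "i < n" for i
    using p(2) that pn[OF that] lenx unfolding permute_list_def xs_def by auto
  have sls: "sorted_wrt (\<ge>) ls" unfolding ls_def by (simp add: sorted_wrt_rev)
  have lenl: "length ls = n" unfolding ls_def lenx[symmetric] by simp
  define \<phi>' where "\<phi>' = (\<lambda>k. \<phi> (p k))"
  define d' where "d' = (\<lambda>k. d (p k))"
  have "orthonormal n w \<phi>' n"
    using on pn pinj unfolding orthonormal_def \<phi>'_def by auto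
  moreover have "\<forall>k<n. \<forall>x<n. mop n M (\<phi>' k) x = d' k * \<phi>' k x"
    using ev pn unfolding \<phi>'_def d'_def by auto
  moreover have "\<forall>i j. i \<le> j \<longrightarrow> j < n \<longrightarrow> d' j \<le> d' i"
  proof (intro allI impI)
    fix i j assume ij: "i \<le> j" "j < n"
    show "d' j \<le> d' i"
    proof (cases "i = j")
      case False
      then have "i < j" using ij by simp
      then have "ls ! j \<le> ls ! i" using sls ij lenl by (auto simp: sorted_wrt_iff_nth_less)
      then show ?thesis using lsi ij unfolding d'_def by simp
    qed simp
  qed
  ultimately show ?thesis by blast
qed

lemma char_poly_eig:
  fixes P :: "real mat"
  assumes P: "P \<in> carrier_mat n n"
    and on: "orthonormal n w \<phi> n"
    and ev: "\<forall>k<n. \<forall>x<n. mop n (\<lambda>x y. P $$ (x,y)) (\<phi> k) x = d k * \<phi> k x"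
  shows "char_poly P = (\<Prod>a\<leftarrow>map d [0..<n]. [:-a, 1:])"
proof -
  define U :: "real mat" where "U = mat n n (\<lambda>(x,k). \<phi> k x)"
  define V :: "real mat" where "V = mat n n (\<lambda>(k,y). w y * \<phi> k y)"
  define D :: "real mat" where "D = mat n n (\<lambda>(k,l). if k = l then d k else 0)"
  have U: "U \<in> carrier_mat n n" and V: "V \<in> carrier_mat n n" and D: "D \<in> carrier_mat n n"
    unfolding U_def V_def D_def by auto
  have VU: "V * U = 1\<^sub>m n"
  proof (rule eq_matI)
    fix i j assume ij: "i < dim_row (1\<^sub>m n :: real mat)" "j < dim_col (1\<^sub>m n :: real mat)"
    then have "(V * U) $$ (i,j) = (\<Sum>y<n. w y * \<phi> i y * \<phi> j y)"
      unfolding V_def U_def by (simp add: scalar_prod_def atLeast0LessThan mult_ac)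
    also have "\<dots> = ip n w (\<phi> i) (\<phi> j)" unfolding ip_def ..
    also have "\<dots> = (1\<^sub>m n :: real mat) $$ (i,j)" using on ij unfolding orthonormal_def by auto
    finally show "(V * U) $$ (i,j) = (1\<^sub>m n :: real mat) $$ (i,j)" .
  qed (use V U in auto)
  have UV: "U * V = 1\<^sub>m n" by (rule mat_mult_left_right_inverse[OF V U VU])
  have PU: "P * U = U * D"
  proof (rule eq_matI)
    fix i j assume ij: "i < dim_row (U * D)" "j < dim_col (U * D)"
    then have ij': "i < n" "j < n" using U D by auto
    have "(P * U) $$ (i,j) = mop n (\<lambda>x y. P $$ (x,y)) (\<phi> j) i"
      using ij' P unfolding U_def mop_def by (simp add: scalar_prod_def atLeast0LessThan)
    also have "\<dots> = d j * \<phi> j i" using ev ij' by auto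
    also have "\<dots> = (\<Sum>l<n. \<phi> l i * (if l = j then d l else 0))"
      using ij' by (simp add: if_distrib cong: if_cong)
    also have "\<dots> = (U * D) $$ (i,j)"
      using ij' unfolding U_def D_def by (simp add: scalar_prod_def atLeast0LessThan)
    finally show "(P * U) $$ (i,j) = (U * D) $$ (i,j)" .
  qed (use P U D in auto)
  have "P = P * (U * V)" using P UV by simp
  also have "\<dots> = P * U * V" using P U V by (simp add: assoc_mult_mat)
  also have "\<dots> = U * D * V" unfolding PU ..
  finally have "similar_mat_wit P D U V"
    unfolding similar_mat_wit_def Let_def using P U V D UV VU by auto
  then have "similar_mat P D" unfolding similar_mat_def by blast
  then have "char_poly P = char_poly D" by (rule char_poly_similar)
  also have "\<dots> = (\<Prod>a\<leftarrow>diag_mat D. [:-a, 1:])"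
    by (rule char_poly_upper_triangular[OF D]) (auto simp: upper_triangular_def D_def)
  also have "diag_mat D = map d [0..<n]" unfolding diag_mat_def D_def by auto
  finally show ?thesis .
qed

lemma sorted_eig:
  fixes P :: "real mat"
  assumes P: "P \<in> carrier_mat n n"
    and on: "orthonormal n w \<phi> n"
    and ev: "\<forall>k<n. \<forall>x<n. mop n (\<lambda>x y. P $$ (x,y)) (\<phi> k) x = d k * \<phi> k x"
    and srt: "\<forall>i j. i \<le> j \<longrightarrow> j < n \<longrightarrow> d j \<le> d i"
  shows "sorted_eigenvalues P (map d [0..<n])"
  unfolding sorted_eigenvalues_def
  using char_poly_eig[OF P on ev] P srt by (auto simp: sorted_wrt_iff_nth_less)

lemma sum_PiE_Suc:
  fixes F :: "(nat \<Rightarrow> 'b) \<Rightarrow> real"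
  assumes B: "finite B"
  shows "(\<Sum>p\<in>PiE {..<Suc N} (\<lambda>_. B). F p) = (\<Sum>p\<in>PiE {..<N} (\<lambda>_. B). \<Sum>y\<in>B. F (p(N:=y)))"
proof -
  have N: "N \<notin> {..<N}" by simp
  have "(\<Sum>p\<in>PiE {..<Suc N} (\<lambda>_. B). F p) = (\<Sum>p\<in>PiE (insert N {..<N}) (\<lambda>_. B). F p)"
    by (simp add: lessThan_Suc)
  also have "\<dots> = (\<Sum>p\<in>(\<lambda>(y, g). g(N := y)) ` (B \<times> PiE {..<N} (\<lambda>_. B)). F p)"
    by (simp add: PiE_insert_eq)
  also have "\<dots> = (\<Sum>yg\<in>B \<times> PiE {..<N} (\<lambda>_. B). F ((\<lambda>(y, g). g(N := y)) yg))"
    by (rule sum.reindex[OF inj_combinator[OF N], unfolded comp_def])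
  also have "\<dots> = (\<Sum>y\<in>B. \<Sum>g\<in>PiE {..<N} (\<lambda>_. B). F (g(N := y)))"
    by (simp add: sum.cartesian_product case_prod_unfold)
  also have "\<dots> = (\<Sum>g\<in>PiE {..<N} (\<lambda>_. B). \<Sum>y\<in>B. F (g(N := y)))" by (rule sum.swap)
  finally show ?thesis .
qed

lemma path_prob_upd:
  "path_prob \<pi> P (Suc (Suc M)) (p(Suc M := y)) = path_prob \<pi> P (Suc M) p * P $$ (p M, y)"
proof -
  have "(\<Prod>i<Suc M. P $$ ((p(Suc M := y)) i, (p(Suc M := y)) (Suc i))) =
        (\<Prod>i<M. P $$ ((p(Suc M := y)) i, (p(Suc M := y)) (Suc i))) * P $$ (p M, y)"
    by simp
  also have "(\<Prod>i<M. P $$ ((p(Suc M := y)) i, (p(Suc M := y)) (Suc i))) = (\<Prod>i<M. P $$ (p i, p (Suc i)))"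
    by (rule prod.cong) auto
  finally show ?thesis unfolding path_prob_def by (simp add: mult_ac)
qed

lemma E_ext:
  assumes G: "\<And>p q. (\<forall>i\<le>M. p i = q i) \<Longrightarrow> G p = G q"
  shows "path_expect n \<pi> P (Suc (Suc M)) (\<lambda>p. G p * k (p (Suc M))) =
         path_expect n \<pi> P (Suc M) (\<lambda>p. G p * mop n (\<lambda>x y. P $$ (x,y)) k (p M))"
proof -
  have "path_expect n \<pi> P (Suc (Suc M)) (\<lambda>p. G p * k (p (Suc M))) =
     (\<Sum>p\<in>PiE {..<Suc M} (\<lambda>_. {..<n}). \<Sum>y\<in>{..<n}. path_prob \<pi> P (Suc (Suc M)) (p(Suc M := y)) * (G (p(Suc M := y)) * k y))"
    unfolding path_expect_def by (subst sum_PiE_Suc) auto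
  also have "\<dots> = (\<Sum>p\<in>PiE {..<Suc M} (\<lambda>_. {..<n}). path_prob \<pi> P (Suc M) p * (G p * mop n (\<lambda>x y. P $$ (x,y)) k (p M)))"
  proof (rule sum.cong[OF refl])
    fix p
    have "G (p(Suc M := y)) = G p" for y by (rule G) auto
    then show "(\<Sum>y\<in>{..<n}. path_prob \<pi> P (Suc (Suc M)) (p(Suc M := y)) * (G (p(Suc M := y)) * k y)) =
        path_prob \<pi> P (Suc M) p * (G p * mop n (\<lambda>x y. P $$ (x,y)) k (p M))"
      unfolding path_prob_upd mop_def by (simp add: sum_distrib_left mult_ac)
  qed
  also have "\<dots> = path_expect n \<pi> P (Suc M) (\<lambda>p. G p * mop n (\<lambda>x y. P $$ (x,y)) k (p M))"
    unfolding path_expect_def ..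
  finally show ?thesis .
qed

lemma rowsum:
  assumes "transition_matrix n P" "x < n"
  shows "mop n (\<lambda>x y. P $$ (x,y)) (\<lambda>_. c) x = c"
  using assms unfolding transition_matrix_def mop_def by (simp add: sum_distrib_right[symmetric])

lemma stationary:
  assumes "transition_matrix n P" "reversible n \<pi> P"
  shows "(\<Sum>x<n. \<pi> x * mop n (\<lambda>x y. P $$ (x,y)) u x) = (\<Sum>x<n. \<pi> x * u x)"
proof -
  have "(\<Sum>x<n. \<pi> x * mop n (\<lambda>x y. P $$ (x,y)) u x) = (\<Sum>x<n. \<Sum>y<n. (\<pi> x * P $$ (x,y)) * u y)"
    unfolding mop_def by (simp add: sum_distrib_left mult_ac)
  also have "\<dots> = (\<Sum>x<n. \<Sum>y<n. (\<pi> y * P $$ (y,x)) * u y)"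
    using assms(2) unfolding reversible_def by (intro sum.cong refl) auto
  also have "\<dots> = (\<Sum>y<n. \<Sum>x<n. (\<pi> y * P $$ (y,x)) * u y)" by (rule sum.swap)
  also have "\<dots> = (\<Sum>y<n. \<pi> y * u y * mop n (\<lambda>x y. P $$ (x,y)) (\<lambda>_. 1) y)"
    unfolding mop_def by (simp add: sum_distrib_left sum_distrib_right mult_ac)
  also have "\<dots> = (\<Sum>y<n. \<pi> y * u y)"
    using rowsum[OF assms(1)] by (intro sum.cong refl) auto
  finally show ?thesis .
qed

lemma E_one:
  assumes "transition_matrix n P" "reversible n \<pi> P"
  shows "path_expect n \<pi> P (Suc M) (\<lambda>p. u (p M)) = (\<Sum>x<n. \<pi> x * u x)"
proof (induction M arbitrary: u)
  case 0
  have "path_expect n \<pi> P (Suc 0) (\<lambda>p. u (p 0)) =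
     (\<Sum>p\<in>PiE {..<0} (\<lambda>_. {..<n}). \<Sum>y\<in>{..<n}. path_prob \<pi> P (Suc 0) (p(0 := y)) * u y)"
    unfolding path_expect_def by (subst sum_PiE_Suc) auto
  also have "\<dots> = (\<Sum>x<n. \<pi> x * u x)" by (simp add: path_prob_def)
  finally show ?case .
next
  case (Suc M)
  have "path_expect n \<pi> P (Suc (Suc M)) (\<lambda>p. u (p (Suc M))) = path_expect n \<pi> P (Suc (Suc M)) (\<lambda>p. 1 * u (p (Suc M)))"
    by simp
  also have "\<dots> = path_expect n \<pi> P (Suc M) (\<lambda>p. 1 * mop n (\<lambda>x y. P $$ (x,y)) u (p M))"
    by (rule E_ext) auto
  also have "\<dots> = (\<Sum>x<n. \<pi> x * mop n (\<lambda>x y. P $$ (x,y)) u x)" using Suc by simp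
  also have "\<dots> = (\<Sum>x<n. \<pi> x * u x)" by (rule stationary[OF assms])
  finally show ?case .
qed

lemma path_expect_cong:
  assumes "\<And>p. p \<in> PiE {..<N} (\<lambda>_. {..<n}) \<Longrightarrow> g p = h p"
  shows "path_expect n \<pi> P N g = path_expect n \<pi> P N h"
  unfolding path_expect_def using assms by (intro sum.cong) auto

lemma E_drop:
  assumes T: "transition_matrix n P"
    and G: "\<And>p q. (\<forall>i\<le>M. p i = q i) \<Longrightarrow> G p = G q"
  shows "path_expect n \<pi> P (Suc M + d) G = path_expect n \<pi> P (Suc M) G"
proof (induction d)
  case (Suc d)
  have "path_expect n \<pi> P (Suc (Suc (M + d))) G = path_expect n \<pi> P (Suc (Suc (M + d))) (\<lambda>p. G p * (\<lambda>_. 1) (p (Suc (M + d))))"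
    by simp
  also have "\<dots> = path_expect n \<pi> P (Suc (M + d)) (\<lambda>p. G p * mop n (\<lambda>x y. P $$ (x,y)) (\<lambda>_. 1) (p (M + d)))"
    by (rule E_ext) (rule G, auto)
  also have "\<dots> = path_expect n \<pi> P (Suc (M + d)) G"
  proof (rule path_expect_cong)
    fix p assume "p \<in> PiE {..<Suc (M + d)} (\<lambda>_. {..<n})"
    then have "p (M + d) < n" by auto
    then show "G p * mop n (\<lambda>x y. P $$ (x,y)) (\<lambda>_. 1) (p (M + d)) = G p" using rowsum[OF T] by simp
  qed
  finally show ?case using Suc by simp
qed simp

definition mpow :: "nat \<Rightarrow> real mat \<Rightarrow> nat \<Rightarrow> (nat \<Rightarrow> real) \<Rightarrow> nat \<Rightarrow> real" where
  "mpow n P m = (mop n (\<lambda>x y. P $$ (x,y)) ^^ m)"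

lemma E_two:
  assumes "transition_matrix n P" "reversible n \<pi> P"
  shows "path_expect n \<pi> P (Suc (i + d)) (\<lambda>p. h (p i) * k (p (i + d))) = (\<Sum>x<n. \<pi> x * h x * mpow n P d k x)"
proof (induction d arbitrary: k)
  case 0
  show ?case using E_one[OF assms, of i "\<lambda>x. h x * k x"] by (simp add: mpow_def mult_ac)
next
  case (Suc d)
  have "path_expect n \<pi> P (Suc (Suc (i + d))) (\<lambda>p. h (p i) * k (p (Suc (i + d)))) =
        path_expect n \<pi> P (Suc (i + d)) (\<lambda>p. h (p i) * mop n (\<lambda>x y. P $$ (x,y)) k (p (i + d)))"
    by (rule E_ext) auto
  also have "\<dots> = (\<Sum>x<n. \<pi> x * h x * mpow n P d (mop n (\<lambda>x y. P $$ (x,y)) k) x)" by (rule Suc)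
  also have "mpow n P d (mop n (\<lambda>x y. P $$ (x,y)) k) = mpow n P (Suc d) k"
    unfolding mpow_def by (simp add: funpow_Suc_right del: funpow.simps)
  finally show ?case by simp
qed

lemma E_two':
  assumes "transition_matrix n P" "reversible n \<pi> P" "i \<le> j" "j < N"
  shows "path_expect n \<pi> P N (\<lambda>p. h (p i) * k (p j)) = (\<Sum>x<n. \<pi> x * h x * mpow n P (j - i) k x)"
proof -
  obtain e where N: "N = Suc j + e" using assms(4) by (metis add_Suc less_iff_Suc_add)
  have "path_expect n \<pi> P N (\<lambda>p. h (p i) * k (p j)) = path_expect n \<pi> P (Suc j) (\<lambda>p. h (p i) * k (p j))"
    unfolding N using assms(3) by (intro E_drop[OF assms(1)]) auto
  also have "\<dots> = path_expect n \<pi> P (Suc (i + (j - i))) (\<lambda>p. h (p i) * k (p (i + (j - i))))"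
    using assms(3) by simp
  also have "\<dots> = (\<Sum>x<n. \<pi> x * h x * mpow n P (j - i) k x)" by (rule E_two[OF assms(1,2)])
  finally show ?thesis .
qed

lemma path_expect_sum: "path_expect n \<pi> P N (\<lambda>p. \<Sum>i\<in>I. g i p) = (\<Sum>i\<in>I. path_expect n \<pi> P N (g i))"
  unfolding path_expect_def by (simp add: sum_distrib_left sum.swap[of _ I])

definition dist_nat :: "nat \<Rightarrow> nat \<Rightarrow> nat" where
  "dist_nat i j = (if i \<le> j then j - i else i - j)"

lemma var_sum_formula:
  assumes T: "transition_matrix n P" and R: "reversible n \<pi> P"
    and mean: "(\<Sum>x<n. \<pi> x * f x) = 0"
  shows "var_sum n \<pi> P f N = (\<Sum>i<N. \<Sum>j<N. (\<Sum>x<n. \<pi> x * f x * mpow n P (dist_nat i j) f x))"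
proof -
  have m1: "path_expect n \<pi> P N (\<lambda>p. f (p i)) = 0" if "i < N" for i
    using E_two'[OF T R le_refl that, of "\<lambda>_. 1" f] mean by (simp add: mpow_def)
  have "path_expect n \<pi> P N (\<lambda>p. \<Sum>i<N. f (p i)) = (\<Sum>i<N. path_expect n \<pi> P N (\<lambda>p. f (p i)))"
    by (rule path_expect_sum)
  also have "\<dots> = 0" using m1 by simp
  finally have E1: "path_expect n \<pi> P N (\<lambda>p. \<Sum>i<N. f (p i)) = 0" .
  have m2: "path_expect n \<pi> P N (\<lambda>p. f (p i) * f (p j)) = (\<Sum>x<n. \<pi> x * f x * mpow n P (dist_nat i j) f x)"
    if "i < N" "j < N" for i j
  proof (cases "i \<le> j")
    case True
    then show ?thesis using E_two'[OF T R True that(2)] by (simp add: dist_nat_def)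
  next
    case False
    then have "path_expect n \<pi> P N (\<lambda>p. f (p i) * f (p j)) = path_expect n \<pi> P N (\<lambda>p. f (p j) * f (p i))"
      by (simp add: mult.commute)
    also have "\<dots> = (\<Sum>x<n. \<pi> x * f x * mpow n P (i - j) f x)" using E_two'[OF T R _ that(1)] False by simp
    finally show ?thesis using False by (simp add: dist_nat_def)
  qed
  have "path_expect n \<pi> P N (\<lambda>p. (\<Sum>i<N. f (p i))^2) = path_expect n \<pi> P N (\<lambda>p. \<Sum>i<N. \<Sum>j<N. f (p i) * f (p j))"
    by (simp add: power2_eq_square sum_product)
  also have "\<dots> = (\<Sum>i<N. \<Sum>j<N. path_expect n \<pi> P N (\<lambda>p. f (p i) * f (p j)))"
    by (simp add: path_expect_sum)
  also have "\<dots> = (\<Sum>i<N. \<Sum>j<N. (\<Sum>x<n. \<pi> x * f x * mpow n P (dist_nat i j) f x))"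
    using m2 by (intro sum.cong refl) auto
  finally show ?thesis unfolding var_sum_def E1 by simp
qed

lemma ip_expand:
  assumes on: "orthonormal n w \<phi> n"
  shows "ip n w (\<lambda>x. \<Sum>k<n. a k * \<phi> k x) (\<lambda>x. \<Sum>k<n. b k * \<phi> k x) = (\<Sum>k<n. a k * b k)"
proof -
  have "ip n w (\<lambda>x. \<Sum>k<n. a k * \<phi> k x) (\<lambda>x. \<Sum>k<n. b k * \<phi> k x) =
        (\<Sum>k<n. a k * ip n w (\<phi> k) (\<lambda>x. \<Sum>l<n. b l * \<phi> l x))" by (rule ip_sum_left)
  also have "\<dots> = (\<Sum>k<n. a k * (\<Sum>l<n. b l * ip n w (\<phi> k) (\<phi> l)))" by (simp add: ip_sum_right)
  also have "\<dots> = (\<Sum>k<n. a k * b k)"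
  proof (rule sum.cong[OF refl])
    fix k assume k: "k \<in> {..<n}"
    have "(\<Sum>l<n. b l * ip n w (\<phi> k) (\<phi> l)) = (\<Sum>l<n. if l = k then b l else 0)"
      using on k unfolding orthonormal_def by (intro sum.cong refl) auto
    also have "\<dots> = b k" using k by simp
    finally show "a k * (\<Sum>l<n. b l * ip n w (\<phi> k) (\<phi> l)) = a k * b k" by simp
  qed
  finally show ?thesis .
qed

lemma ip_basis_expand:
  assumes on: "orthonormal n w \<phi> n" and l: "l < n"
  shows "ip n w (\<phi> l) (\<lambda>x. \<Sum>k<n. a k * \<phi> k x) = a l"
proof -
  have "ip n w (\<phi> l) (\<lambda>x. \<Sum>k<n. a k * \<phi> k x) = (\<Sum>k<n. a k * ip n w (\<phi> l) (\<phi> k))" by (rule ip_sum_right)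
  also have "\<dots> = (\<Sum>k<n. if k = l then a k else 0)"
    using on l unfolding orthonormal_def by (intro sum.cong refl) auto
  also have "\<dots> = a l" using l by simp
  finally show ?thesis .
qed

lemma mpow_expand:
  assumes ev: "\<forall>k<n. \<forall>x<n. mop n (\<lambda>x y. P $$ (x,y)) (\<phi> k) x = d k * \<phi> k x"
  shows "x < n \<Longrightarrow> mpow n P m (\<lambda>x. \<Sum>k<n. a k * \<phi> k x) x = (\<Sum>k<n. (a k * d k ^ m) * \<phi> k x)"
proof (induction m arbitrary: x)
  case 0
  then show ?case by (simp add: mpow_def)
next
  case (Suc m)
  have "mpow n P (Suc m) (\<lambda>x. \<Sum>k<n. a k * \<phi> k x) x =
        mop n (\<lambda>x y. P $$ (x,y)) (mpow n P m (\<lambda>x. \<Sum>k<n. a k * \<phi> k x)) x"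
    by (simp add: mpow_def)
  also have "\<dots> = mop n (\<lambda>x y. P $$ (x,y)) (\<lambda>x. \<Sum>k<n. (a k * d k ^ m) * \<phi> k x) x"
    using Suc.IH by (intro mop_cong) auto
  also have "\<dots> = (\<Sum>k<n. (a k * d k ^ m) * mop n (\<lambda>x y. P $$ (x,y)) (\<phi> k) x)" by (rule mop_sum)
  also have "\<dots> = (\<Sum>k<n. (a k * d k ^ Suc m) * \<phi> k x)"
    using ev Suc.prems by (intro sum.cong refl) auto
  finally show ?case .
qed

definition Tsum :: "nat \<Rightarrow> real \<Rightarrow> real" where
  "Tsum N l = (\<Sum>i<N. \<Sum>j<N. l ^ dist_nat i j)"

definition phi :: "real \<Rightarrow> real" where
  "phi l = (1 + l) / (1 - l)"

lemma Gsum: fixes l :: real shows "(1 - l) * (\<Sum>i<N. l ^ (N - i)) = l * (1 - l ^ N)"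
proof (induction N)
  case (Suc N)
  have "(\<Sum>i<Suc N. l ^ (Suc N - i)) = (\<Sum>i<N. l ^ (Suc N - i)) + l" by simp
  also have "(\<Sum>i<N. l ^ (Suc N - i)) = l * (\<Sum>i<N. l ^ (N - i))"
    by (simp add: sum_distrib_left Suc_diff_le less_imp_le)
  finally have "(\<Sum>i<Suc N. l ^ (Suc N - i)) = l * (\<Sum>i<N. l ^ (N - i)) + l" .
  then have "(1 - l) * (\<Sum>i<Suc N. l ^ (Suc N - i)) = l * ((1 - l) * (\<Sum>i<N. l ^ (N - i))) + (1 - l) * l"
    by (simp add: algebra_simps)
  also have "\<dots> = l * (1 - l ^ Suc N)" unfolding Suc by (simp add: algebra_simps)
  finally show ?case .
qed simp

lemma Tsum_Suc: "Tsum (Suc N) l = Tsum N l + 2 * (\<Sum>i<N. l ^ (N - i)) + 1"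
proof -
  have "Tsum (Suc N) l = (\<Sum>i<N. (\<Sum>j<N. l ^ dist_nat i j) + l ^ dist_nat i N) + ((\<Sum>j<N. l ^ dist_nat N j) + l ^ dist_nat N N)"
    unfolding Tsum_def by simp
  also have "\<dots> = Tsum N l + (\<Sum>i<N. l ^ (N - i)) + ((\<Sum>j<N. l ^ (N - j)) + 1)"
    unfolding Tsum_def sum.distrib by (simp add: dist_nat_def)
  finally show ?thesis by simp
qed

lemma Tsum_closed: "(1 - l)^2 * Tsum N l = real N * (1 + l) * (1 - l) - 2 * l * (1 - l ^ N)"
proof (induction N)
  case 0
  then show ?case by (simp add: Tsum_def)
next
  case (Suc N)
  have "(1 - l)^2 * Tsum (Suc N) l = (1 - l)^2 * Tsum N l + 2 * (1 - l) * ((1 - l) * (\<Sum>i<N. l ^ (N - i))) + (1 - l)^2"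
    unfolding Tsum_Suc by (simp add: algebra_simps power2_eq_square)
  also have "\<dots> = real N * (1 + l) * (1 - l) - 2 * l * (1 - l ^ N) + 2 * (1 - l) * (l * (1 - l ^ N)) + (1 - l)^2"
    unfolding Suc Gsum ..
  also have "\<dots> = real (Suc N) * (1 + l) * (1 - l) - 2 * l * (1 - l ^ Suc N)"
    by (simp add: algebra_simps power2_eq_square)
  finally show ?case .
qed

lemma Tsum_lim:
  assumes "\<bar>l\<bar> \<le> 1" "l \<noteq> 1"
  shows "(\<lambda>N. Tsum N l / real N) \<longlonglongrightarrow> phi l"
proof -
  have l1: "1 - l > 0" using assms by auto
  define K where "K = 4 / (1 - l)^2"
  have eq: "Tsum N l / real N = phi l - (2 * l * (1 - l ^ N) / (1 - l)^2) / real N" if "N > 0" for N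
  proof -
    have c: "(1 - l)^2 > 0" using l1 by simp
    have "(1 - l)^2 * Tsum N l = real N * ((1 + l) * (1 - l)) - 2 * l * (1 - l ^ N)"
      using Tsum_closed[of l N] by (simp add: mult.assoc)
    then have "Tsum N l = (real N * ((1 + l) * (1 - l)) - 2 * l * (1 - l ^ N)) / (1 - l)^2"
      using c by (metis nonzero_mult_div_cancel_left less_irrefl)
    then have "Tsum N l / real N = (real N * ((1 + l) * (1 - l)) / (1 - l)^2) / real N - (2 * l * (1 - l ^ N) / (1 - l)^2) / real N"
      by (simp add: diff_divide_distrib)
    also have "(real N * ((1 + l) * (1 - l)) / (1 - l)^2) / real N = ((1 + l) * (1 - l)) / ((1 - l) * (1 - l))"
      using that by (simp add: power2_eq_square)
    also have "\<dots> = phi l" unfolding phi_def using l1 by simp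
    finally show ?thesis .
  qed
  have bnd: "norm ((2 * l * (1 - l ^ N) / (1 - l)^2) / real N) \<le> K / real N" for N
  proof -
    have "\<bar>l ^ N\<bar> \<le> 1" using assms(1) by (simp add: power_abs power_le_one)
    then have b: "\<bar>1 - l ^ N\<bar> \<le> 2" by linarith
    have c: "\<bar>2 * l\<bar> \<le> 2" using assms(1) by simp
    have "\<bar>2 * l * (1 - l ^ N)\<bar> = \<bar>2 * l\<bar> * \<bar>1 - l ^ N\<bar>" by (rule abs_mult)
    also have "\<dots> \<le> 2 * 2" by (rule mult_mono) (use b c in auto)
    finally have X: "\<bar>2 * l * (1 - l ^ N)\<bar> \<le> 4" by simp
    have "\<bar>2 * l * (1 - l ^ N) / (1 - l)^2\<bar> = \<bar>2 * l * (1 - l ^ N)\<bar> / (1 - l)^2"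
      by (simp add: abs_div)
    also have "\<dots> \<le> K" unfolding K_def using l1 X by (intro divide_right_mono) auto
    finally have Y: "\<bar>2 * l * (1 - l ^ N) / (1 - l)^2\<bar> \<le> K" .
    have "norm ((2 * l * (1 - l ^ N) / (1 - l)^2) / real N) = \<bar>2 * l * (1 - l ^ N) / (1 - l)^2\<bar> / real N"
      by (simp add: abs_div)
    also have "\<dots> \<le> K / real N" using Y by (intro divide_right_mono) auto
    finally show ?thesis .
  qed
  have "(\<lambda>N. (2 * l * (1 - l ^ N) / (1 - l)^2) / real N) \<longlonglongrightarrow> 0"
  proof (rule tendsto_0_le[OF lim_const_over_n[of K]])
    have K0: "K \<ge> 0" unfolding K_def by simp
    show "\<forall>\<^sub>F N in sequentially. norm ((2 * l * (1 - l ^ N) / (1 - l)^2) / real N) \<le> norm (K / real N) * 1"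
      using bnd K0 by (intro always_eventually allI) simp
  qed
  then have "(\<lambda>N. phi l - (2 * l * (1 - l ^ N) / (1 - l)^2) / real N) \<longlonglongrightarrow> phi l - 0"
    by (intro tendsto_diff tendsto_const)
  then have "(\<lambda>N. phi l - (2 * l * (1 - l ^ N) / (1 - l)^2) / real N) \<longlonglongrightarrow> phi l" by simp
  then show ?thesis
  proof (rule Lim_transform_eventually)
    show "\<forall>\<^sub>F N in sequentially. phi l - (2 * l * (1 - l ^ N) / (1 - l)^2) / real N = Tsum N l / real N"
      using eq by (intro eventually_sequentiallyI[of 1]) auto
  qed
qed
lemma asym_formula:
  assumes T: "transition_matrix n P" and R: "reversible n \<pi> P"
    and on: "orthonormal n \<pi> \<phi> n"
    and ev: "\<forall>k<n. \<forall>x<n. mop n (\<lambda>x y. P $$ (x,y)) (\<phi> k) x = d k * \<phi> k x"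
    and dk: "\<forall>k<n. a k \<noteq> 0 \<longrightarrow> \<bar>d k\<bar> \<le> 1 \<and> d k \<noteq> 1"
    and mean: "(\<Sum>x<n. \<pi> x * (\<Sum>k<n. a k * \<phi> k x)) = 0"
  shows "asym_var n \<pi> (\<lambda>x. \<Sum>k<n. a k * \<phi> k x) P = (\<Sum>k<n. (a k)^2 * phi (d k))"
proof -
  define f where "f = (\<lambda>x. \<Sum>k<n. a k * \<phi> k x)"
  have cc: "(\<Sum>x<n. \<pi> x * f x * mpow n P m f x) = (\<Sum>k<n. (a k)^2 * d k ^ m)" for m
  proof -
    have "(\<Sum>x<n. \<pi> x * f x * mpow n P m f x) = ip n \<pi> f (mpow n P m f)" unfolding ip_def ..
    also have "\<dots> = ip n \<pi> f (\<lambda>x. \<Sum>k<n. (a k * d k ^ m) * \<phi> k x)"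
      unfolding f_def by (intro ip_cong refl mpow_expand[OF ev]) auto
    also have "\<dots> = (\<Sum>k<n. a k * (a k * d k ^ m))" unfolding f_def by (rule ip_expand[OF on])
    finally show ?thesis by (simp add: power2_eq_square mult_ac)
  qed
  have vs: "var_sum n \<pi> P f N / real N = (\<Sum>k<n. (a k)^2 * (Tsum N (d k) / real N))" for N
  proof -
    have "var_sum n \<pi> P f N = (\<Sum>i<N. \<Sum>j<N. \<Sum>x<n. \<pi> x * f x * mpow n P (dist_nat i j) f x)"
      by (rule var_sum_formula[OF T R]) (use mean in \<open>simp add: f_def\<close>)
    also have "\<dots> = (\<Sum>i<N. \<Sum>j<N. \<Sum>k<n. (a k)^2 * d k ^ dist_nat i j)"
      unfolding cc ..
    also have "\<dots> = (\<Sum>k<n. (a k)^2 * Tsum N (d k))"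
    proof -
      have "(\<Sum>i<N. \<Sum>j<N. \<Sum>k<n. (a k)^2 * d k ^ dist_nat i j) = (\<Sum>i<N. \<Sum>k<n. \<Sum>j<N. (a k)^2 * d k ^ dist_nat i j)"
        by (rule sum.cong[OF refl]) (rule sum.swap)
      also have "\<dots> = (\<Sum>k<n. \<Sum>i<N. \<Sum>j<N. (a k)^2 * d k ^ dist_nat i j)" by (rule sum.swap)
      also have "\<dots> = (\<Sum>k<n. (a k)^2 * Tsum N (d k))" unfolding Tsum_def by (simp add: sum_distrib_left)
      finally show ?thesis .
    qed
    finally show ?thesis by (simp add: sum_divide_distrib)
  qed
  have "(\<lambda>N. var_sum n \<pi> P f N / real N) \<longlonglongrightarrow> (\<Sum>k<n. (a k)^2 * phi (d k))"
    unfolding vs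
  proof (intro tendsto_sum)
    fix k assume k: "k \<in> {..<n}"
    show "(\<lambda>N. (a k)^2 * (Tsum N (d k) / real N)) \<longlonglongrightarrow> (a k)^2 * phi (d k)"
    proof (cases "a k = 0")
      case False
      then show ?thesis using dk k by (intro tendsto_mult tendsto_const Tsum_lim) auto
    qed simp
  qed
  then show ?thesis unfolding asym_var_def f_def[symmetric] by (rule limI)
qed

lemma pow_entry_Suc:
  assumes "P \<in> carrier_mat n n" "i < n" "j < n"
  shows "(P ^\<^sub>m Suc k) $$ (i,j) = (\<Sum>z<n. (P ^\<^sub>m k) $$ (i,z) * P $$ (z,j))"
  using assms by (simp add: scalar_prod_def atLeast0LessThan)

lemma pow_nonneg:
  assumes T: "transition_matrix n P"
  shows "i < n \<Longrightarrow> j < n \<Longrightarrow> (P ^\<^sub>m k) $$ (i,j) \<ge> 0"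
proof (induction k arbitrary: j)
  case 0
  then show ?case using T by (auto simp: transition_matrix_def)
next
  case (Suc k)
  have P: "P \<in> carrier_mat n n" using T by (simp add: transition_matrix_def)
  show ?case unfolding pow_entry_Suc[OF P Suc.prems]
    using Suc T by (intro sum_nonneg mult_nonneg_nonneg) (auto simp: transition_matrix_def)
qed

lemma avg_max:
  fixes a b :: "nat \<Rightarrow> real"
  assumes "finite A" "\<forall>y\<in>A. a y \<ge> 0" "(\<Sum>y\<in>A. a y) = 1" "\<forall>y\<in>A. b y \<le> M"
    "(\<Sum>y\<in>A. a y * b y) = M" "y0 \<in> A" "a y0 > 0"
  shows "b y0 = M"
proof -
  have "(\<Sum>y\<in>A. a y * (M - b y)) = (\<Sum>y\<in>A. M * a y - a y * b y)"
    by (rule sum.cong) (auto simp: right_diff_distrib)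
  also have "\<dots> = M * (\<Sum>y\<in>A. a y) - (\<Sum>y\<in>A. a y * b y)"
    by (simp only: sum_subtractf sum_distrib_left)
  also have "\<dots> = 0" using assms(3,5) by simp
  finally have s0: "(\<Sum>y\<in>A. a y * (M - b y)) = 0" .
  have nn: "\<And>y. y \<in> A \<Longrightarrow> a y * (M - b y) \<ge> 0"
  proof -
    fix y assume "y \<in> A"
    then have "a y \<ge> 0" "M - b y \<ge> 0" using assms(2,4) by auto
    then show "a y * (M - b y) \<ge> 0" by (rule mult_nonneg_nonneg)
  qed
  have "\<forall>y\<in>A. a y * (M - b y) = 0"
    using sum_nonneg_eq_0_iff[OF assms(1) nn] s0 by simp
  then have "a y0 * (M - b y0) = 0" using assms(6) by blast
  then show ?thesis using assms(7) by simp
qed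

lemma harmonic_const:
  assumes T: "transition_matrix n P" and I: "irreducible_mc n P"
    and h: "\<forall>x<n. mop n (\<lambda>x y. P $$ (x,y)) h x = h x"
    and x: "x < n" and y: "y < n"
  shows "h x = h y"
proof -
  have P: "P \<in> carrier_mat n n" using T by (simp add: transition_matrix_def)
  have n: "n > 0" using x by simp
  define M where "M = Max (h ` {..<n})"
  have Mge: "h z \<le> M" if "z < n" for z unfolding M_def using that by (intro Max_ge) auto
  have "M \<in> h ` {..<n}" unfolding M_def using n by (intro Max_in) auto
  then obtain x0 where x0: "x0 < n" "h x0 = M" by auto
  have key: "(P ^\<^sub>m k) $$ (x0,z) > 0 \<Longrightarrow> z < n \<Longrightarrow> h z = M" for k z
  proof (induction k arbitrary: z)
    case 0
    then have "z = x0" using P x0 by (auto split: if_splits)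
    then show ?case using x0 by simp
  next
    case (Suc k)
    have "\<not> (\<forall>u<n. (P ^\<^sub>m k) $$ (x0,u) * P $$ (u,z) \<le> 0)"
    proof
      assume "\<forall>u<n. (P ^\<^sub>m k) $$ (x0,u) * P $$ (u,z) \<le> 0"
      then have "(\<Sum>u<n. (P ^\<^sub>m k) $$ (x0,u) * P $$ (u,z)) \<le> 0" by (intro sum_nonpos) auto
      then show False using Suc.prems pow_entry_Suc[OF P x0(1) Suc.prems(2)] by simp
    qed
    then obtain u where u: "u < n" "(P ^\<^sub>m k) $$ (x0,u) * P $$ (u,z) > 0" by force
    have "(P ^\<^sub>m k) $$ (x0,u) \<ge> 0" "P $$ (u,z) \<ge> 0"
      using pow_nonneg[OF T x0(1) u(1)] T u(1) Suc.prems(2) by (auto simp: transition_matrix_def)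
    with u(2) have pos: "(P ^\<^sub>m k) $$ (x0,u) > 0" "P $$ (u,z) > 0"
      by (auto simp: zero_less_mult_iff)
    have hu: "h u = M" using Suc.IH[OF pos(1) u(1)] .
    show ?case
    proof (rule avg_max[of "{..<n}" "\<lambda>y. P $$ (u,y)" h M z])
      show "(\<Sum>y\<in>{..<n}. P $$ (u,y) * h y) = M" using h u(1) hu unfolding mop_def by simp
    qed (use T u(1) Mge pos(2) Suc.prems(2) in \<open>auto simp: transition_matrix_def\<close>)
  qed
  have all: "h z = M" if "z < n" for z
  proof -
    from I x0(1) that obtain k where "(P ^\<^sub>m k) $$ (x0,z) > 0" unfolding irreducible_mc_def by blast
    then show ?thesis using key that by blast
  qed
  show ?thesis using all[OF x] all[OF y] by simp
qed

lemma eig_bound: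
  assumes T: "transition_matrix n P"
    and ev: "\<forall>x<n. mop n (\<lambda>x y. P $$ (x,y)) u x = lam * u x"
    and nz: "z < n" "u z \<noteq> 0"
  shows "\<bar>lam\<bar> \<le> 1"
proof -
  have n: "n > 0" using nz by simp
  define M where "M = Max ((\<lambda>x. \<bar>u x\<bar>) ` {..<n})"
  have Mge: "\<bar>u x\<bar> \<le> M" if "x < n" for x unfolding M_def using that by (intro Max_ge) auto
  have "M \<in> (\<lambda>x. \<bar>u x\<bar>) ` {..<n}" unfolding M_def using n by (intro Max_in) auto
  then obtain x0 where x0: "x0 < n" "\<bar>u x0\<bar> = M" by auto
  have Mpos: "M > 0" using Mge[OF nz(1)] nz(2) by linarith
  have "\<bar>lam\<bar> * M = \<bar>lam * u x0\<bar>" using x0 by (simp add: abs_mult)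
  also have "\<dots> = \<bar>\<Sum>y<n. P $$ (x0,y) * u y\<bar>" using ev x0 unfolding mop_def by simp
  also have "\<dots> \<le> (\<Sum>y<n. \<bar>P $$ (x0,y) * u y\<bar>)" by (rule sum_abs)
  also have "\<dots> \<le> (\<Sum>y<n. P $$ (x0,y) * M)"
  proof (rule sum_mono)
    fix y assume "y \<in> {..<n}"
    then have "P $$ (x0,y) \<ge> 0" "\<bar>u y\<bar> \<le> M" using T x0 Mge by (auto simp: transition_matrix_def)
    then show "\<bar>P $$ (x0,y) * u y\<bar> \<le> P $$ (x0,y) * M" by (simp add: abs_mult mult_left_mono)
  qed
  also have "\<dots> = M" using T x0 by (simp add: transition_matrix_def sum_distrib_right[symmetric])
  finally show ?thesis using Mpos by simp
qed

lemma ip_const: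
  assumes "\<forall>x<n. u x = c" "\<forall>x<n. v x = c'"
  shows "ip n w u v = (\<Sum>x<n. w x) * (c * c')"
proof -
  have "ip n w u v = (\<Sum>x<n. w x * (c * c'))" unfolding ip_def using assms by (intro sum.cong) (auto simp: mult.assoc)
  then show ?thesis by (simp add: sum_distrib_right)
qed

lemma chain_spec:
  assumes pd: "prob_dist n \<pi>" and T: "transition_matrix n P" and I: "irreducible_mc n P"
    and R: "reversible n \<pi> P"
    and on: "orthonormal n \<pi> \<phi> n"
    and ev: "\<forall>k<n. \<forall>x<n. mop n (\<lambda>x y. P $$ (x,y)) (\<phi> k) x = d k * \<phi> k x"
    and srt: "\<forall>i j. i \<le> j \<longrightarrow> j < n \<longrightarrow> d j \<le> d i"
    and n: "n > 0"
  shows "d 0 = 1" "\<forall>k. 0 < k \<longrightarrow> k < n \<longrightarrow> d k < 1" "\<forall>k<n. \<bar>d k\<bar> \<le> 1"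
    "\<forall>k. 0 < k \<longrightarrow> k < n \<longrightarrow> (\<Sum>x<n. \<pi> x * \<phi> k x) = 0"
    "\<exists>c. \<forall>x<n. \<phi> 0 x = c"
proof -
  have w: "\<forall>x<n. \<pi> x > 0" and s1: "(\<Sum>x<n. \<pi> x) = 1" using pd by (auto simp: prob_dist_def)
  have sa: "\<forall>x<n. \<forall>y<n. \<pi> x * P $$ (x,y) = \<pi> y * P $$ (y,x)" using R by (simp add: reversible_def)
  have onk: "ip n \<pi> (\<phi> k) (\<phi> l) = (if k = l then 1 else 0)" if "k < n" "l < n" for k l
    using on that unfolding orthonormal_def by auto
  have nzk: "\<exists>z<n. \<phi> k z \<noteq> 0" if "k < n" for k
    using onk[OF that that] ip_zero_iff[OF w, of "\<phi> k"] by auto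
  show bnd: "\<forall>k<n. \<bar>d k\<bar> \<le> 1"
  proof (intro allI impI)
    fix k assume k: "k < n"
    from nzk[OF k] obtain z where "z < n" "\<phi> k z \<noteq> 0" by blast
    then show "\<bar>d k\<bar> \<le> 1" using eig_bound[OF T _ \<open>z < n\<close>] ev k by blast
  qed
  have one: "ip n \<pi> (\<phi> k) (\<lambda>_. 1) * (d k - 1) = 0" if k: "k < n" for k
  proof -
    have "ip n \<pi> (\<phi> k) (\<lambda>_. 1) = ip n \<pi> (\<phi> k) (mop n (\<lambda>x y. P $$ (x,y)) (\<lambda>_. 1))"
      using rowsum[OF T] by (intro ip_cong) auto
    also have "\<dots> = ip n \<pi> (mop n (\<lambda>x y. P $$ (x,y)) (\<phi> k)) (\<lambda>_. 1)" by (simp add: ip_mop[OF sa])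
    also have "\<dots> = ip n \<pi> (\<lambda>x. d k * \<phi> k x) (\<lambda>_. 1)" using ev k by (intro ip_cong) auto
    also have "\<dots> = d k * ip n \<pi> (\<phi> k) (\<lambda>_. 1)" by (rule ip_scale_left)
    finally show ?thesis by (simp add: algebra_simps)
  qed
  have const: "\<exists>c. \<forall>x<n. \<phi> k x = c" if k: "k < n" and dk: "d k = 1" for k
  proof -
    have hk: "\<forall>x<n. mop n (\<lambda>x y. P $$ (x,y)) (\<phi> k) x = \<phi> k x" using ev k dk by simp
    have "\<phi> k x = \<phi> k 0" if "x < n" for x by (rule harmonic_const[OF T I hk that n])
    then show ?thesis by blast
  qed
  have ex1: "\<exists>k<n. d k = 1"
  proof (rule ccontr)
    assume "\<not> (\<exists>k<n. d k = 1)"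
    then have z: "ip n \<pi> (\<phi> k) (\<lambda>_. 1) = 0" if "k < n" for k using one[OF that] that by auto
    have "(1::real) = (\<Sum>j<n. ip n \<pi> (\<phi> j) (\<lambda>_. 1) * \<phi> j 0)"
      using orth_expand[OF w on n, of "\<lambda>_. 1"] by simp
    also have "\<dots> = 0" using z by simp
    finally show False by simp
  qed
  have uniq: "k = l" if H: "k < n" "l < n" "d k = 1" "d l = 1" for k l
  proof (rule ccontr)
    assume kl: "k \<noteq> l"
    obtain c where c: "\<forall>x<n. \<phi> k x = c" using const[OF H(1,3)] by blast
    obtain c' where c': "\<forall>x<n. \<phi> l x = c'" using const[OF H(2,4)] by blast
    have "ip n \<pi> (\<phi> k) (\<phi> l) = c * c'" using ip_const[OF c c'] s1 by simp
    moreover have "ip n \<pi> (\<phi> k) (\<phi> k) = c * c" using ip_const[OF c c] s1 by simp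
    moreover have "ip n \<pi> (\<phi> l) (\<phi> l) = c' * c'" using ip_const[OF c' c'] s1 by simp
    moreover have "ip n \<pi> (\<phi> k) (\<phi> l) = 0" "ip n \<pi> (\<phi> k) (\<phi> k) = 1" "ip n \<pi> (\<phi> l) (\<phi> l) = 1"
      using onk H kl by auto
    ultimately have "c = 0 \<or> c' = 0" "c * c = 1" "c' * c' = 1" by auto
    then show False by auto
  qed
  from ex1 obtain k0 where k0: "k0 < n" "d k0 = 1" by blast
  have "d k0 \<le> d 0" by (rule srt[rule_format]) (use k0 in auto)
  moreover have "\<bar>d 0\<bar> \<le> 1" using bnd n by auto
  ultimately show d0: "d 0 = 1" using k0 by linarith
  show lt: "\<forall>k. 0 < k \<longrightarrow> k < n \<longrightarrow> d k < 1"
  proof (intro allI impI)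
    fix k assume "0 < k" "k < n"
    then have "d k \<noteq> 1" using uniq[of k 0] d0 n by auto
    moreover have "\<bar>d k\<bar> \<le> 1" using bnd \<open>k < n\<close> by auto
    ultimately show "d k < 1" by linarith
  qed
  show "\<forall>k. 0 < k \<longrightarrow> k < n \<longrightarrow> (\<Sum>x<n. \<pi> x * \<phi> k x) = 0"
  proof (intro allI impI)
    fix k assume k: "0 < k" "k < n"
    have "d k < 1" using lt k by blast
    then have "d k - 1 \<noteq> 0" by simp
    then have "ip n \<pi> (\<phi> k) (\<lambda>_. 1) = 0" using one[OF k(2)] by simp
    then show "(\<Sum>x<n. \<pi> x * \<phi> k x) = 0" unfolding ip_def by simp
  qed
  show "\<exists>c. \<forall>x<n. \<phi> 0 x = c" using const[OF n d0] .
qed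

lemma phi_iff:
  assumes "x < 1" "y < 1"
  shows "phi x \<le> phi y \<longleftrightarrow> x \<le> y"
proof -
  have a: "1 - x > 0" "1 - y > 0" using assms by auto
  define c where "c = (1 - x) * (1 - y)"
  have c: "c > 0" unfolding c_def using a by (rule mult_pos_pos)
  have e1: "phi x * c = (1 + x) * (1 - y)"
    unfolding phi_def c_def using a by (simp add: field_simps)
  have e2: "phi y * c = (1 + y) * (1 - x)"
    unfolding phi_def c_def using a by (simp add: field_simps)
  have "phi x \<le> phi y \<longleftrightarrow> phi x * c \<le> phi y * c" using c by simp
  also have "\<dots> \<longleftrightarrow> (1 + x) * (1 - y) \<le> (1 + y) * (1 - x)" unfolding e1 e2 ..
  also have "\<dots> \<longleftrightarrow> x \<le> y" by (simp add: algebra_simps)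
  finally show ?thesis .
qed

lemma var_sum_cong:
  assumes "\<forall>x<n. f x = g x"
  shows "var_sum n \<pi> P f N = var_sum n \<pi> P g N"
proof -
  have "(\<Sum>i<N. f (p i)) = (\<Sum>i<N. g (p i))" if "p \<in> PiE {..<N} (\<lambda>_. {..<n})" for p
    using that assms by (intro sum.cong refl) (auto simp: PiE_iff)
  then show ?thesis unfolding var_sum_def
    by (metis (no_types, lifting) path_expect_cong)
qed

lemma asym_var_cong:
  assumes "\<forall>x<n. f x = g x"
  shows "asym_var n \<pi> f P = asym_var n \<pi> g P"
  unfolding asym_var_def using var_sum_cong[OF assms] by simp

lemma sum_restrict_sub:
  fixes n :: nat
  assumes "B \<subseteq> {..<n}"
  shows "(\<Sum>k<n. (if k \<in> B then a k else 0) * X k) = (\<Sum>k\<in>B. a k * (X k :: real))"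
proof -
  have "(\<Sum>k<n. (if k \<in> B then a k else 0) * X k) = (\<Sum>k<n. if k \<in> B then a k * X k else 0)"
    by (intro sum.cong) auto
  also have "\<dots> = (\<Sum>k\<in>{..<n} \<inter> B. a k * X k)" by (rule sum.inter_restrict[symmetric]) simp
  also have "{..<n} \<inter> B = B" using assms by auto
  finally show ?thesis .
qed

lemma spectral_sorted_obt:
  assumes w: "\<forall>x<n. w x > 0" and sa: "\<forall>x<n. \<forall>y<n. w x * M x y = w y * M y x"
  obtains \<phi> d where "orthonormal n w \<phi> n" "\<forall>k<n. \<forall>x<n. mop n M (\<phi> k) x = d k * \<phi> k x"
     "\<forall>i j. i \<le> j \<longrightarrow> j < n \<longrightarrow> d j \<le> d i"
  using spectral_sorted[OF w sa] by auto

theorem proposition5: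
  fixes n :: nat and \<pi> :: "nat \<Rightarrow> real" and P Q :: "real mat"
  assumes "prob_dist n \<pi>"
    and "transition_matrix n P" and "transition_matrix n Q"
    and "irreducible_mc n P" and "irreducible_mc n Q"
    and "reversible n \<pi> P" and "reversible n \<pi> Q"
    and "efficiency_dominates n \<pi> P Q"
  shows "eigen_dominates P Q"
proof -
  note pd = assms(1) and TP = assms(2) and TQ = assms(3) and IP = assms(4) and IQ = assms(5)
    and RP = assms(6) and RQ = assms(7) and ED = assms(8)
  have w: "\<forall>x<n. \<pi> x > 0" and s1: "(\<Sum>x<n. \<pi> x) = 1" using pd by (auto simp: prob_dist_def)
  have n: "n > 0" using s1 by (cases n) auto
  have saP: "\<forall>x<n. \<forall>y<n. \<pi> x * P $$ (x,y) = \<pi> y * P $$ (y,x)" using RP by (simp add: reversible_def)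
  have saQ: "\<forall>x<n. \<forall>y<n. \<pi> x * Q $$ (x,y) = \<pi> y * Q $$ (y,x)" using RQ by (simp add: reversible_def)
  have Pc: "P \<in> carrier_mat n n" using TP by (simp add: transition_matrix_def)
  have Qc: "Q \<in> carrier_mat n n" using TQ by (simp add: transition_matrix_def)
  obtain \<phi> d where
    onP: "orthonormal n \<pi> \<phi> n" and evP: "\<forall>k<n. \<forall>x<n. mop n (\<lambda>x y. P $$ (x,y)) (\<phi> k) x = d k * \<phi> k x"
    and srtP: "\<forall>i j. i \<le> j \<longrightarrow> j < n \<longrightarrow> d j \<le> d i" by (rule spectral_sorted_obt[OF w saP])
  obtain \<psi> e where
    onQ: "orthonormal n \<pi> \<psi> n" and evQ: "\<forall>k<n. \<forall>x<n. mop n (\<lambda>x y. Q $$ (x,y)) (\<psi> k) x = e k * \<psi> k x"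
    and srtQ: "\<forall>i j. i \<le> j \<longrightarrow> j < n \<longrightarrow> e j \<le> e i" by (rule spectral_sorted_obt[OF w saQ])
  note cP = chain_spec[OF pd TP IP RP onP evP srtP n]
  note cQ = chain_spec[OF pd TQ IQ RQ onQ evQ srtQ n]
  have dom: "d i \<le> e i" if i: "i < n" for i
  proof (cases "i = 0")
    case True
    then show ?thesis using cP(1) cQ(1) by simp
  next
    case False
    then have i0: "0 < i" by simp
    from lin_dep_fun[of "{1..i}" "i - 1" "\<lambda>j x. ip n \<pi> (\<psi> (Suc x)) (\<phi> j)"] i0
    obtain a where a: "\<exists>j\<in>{1..i}. a j \<noteq> 0"
      "\<forall>x<i - 1. (\<Sum>j\<in>{1..i}. a j * ip n \<pi> (\<psi> (Suc x)) (\<phi> j)) = 0" by auto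
    define \<alpha> where "\<alpha> = (\<lambda>k. if k \<in> {1..i} then a k else (0::real))"
    define f where "f = (\<lambda>x. \<Sum>k<n. \<alpha> k * \<phi> k x)"
    have sub: "{1..i} \<subseteq> {..<n}" using i by auto
    have mf: "(\<Sum>x<n. \<pi> x * f x) = 0"
    proof -
      have "(\<Sum>x<n. \<pi> x * f x) = ip n \<pi> (\<lambda>_. 1) f" unfolding ip_def by simp
      also have "\<dots> = (\<Sum>k<n. \<alpha> k * ip n \<pi> (\<lambda>_. 1) (\<phi> k))" unfolding f_def by (rule ip_sum_right)
      also have "\<dots> = 0"
      proof (rule sum.neutral, intro ballI)
        fix k assume k: "k \<in> {..<n}"
        show "\<alpha> k * ip n \<pi> (\<lambda>_. 1) (\<phi> k) = 0"
        proof (cases "k \<in> {1..i}")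
          case True
          then have "ip n \<pi> (\<lambda>_. 1) (\<phi> k) = 0" using cP(4) k unfolding ip_def by auto
          then show ?thesis by simp
        next
          case False
          then have "\<alpha> k = 0" unfolding \<alpha>_def by auto
          then show ?thesis by simp
        qed
      qed
      finally show ?thesis .
    qed
    have vP: "asym_var n \<pi> f P = (\<Sum>k<n. (\<alpha> k)^2 * phi (d k))"
      unfolding f_def
    proof (rule asym_formula[OF TP RP onP evP])
      show "\<forall>k<n. \<alpha> k \<noteq> 0 \<longrightarrow> \<bar>d k\<bar> \<le> 1 \<and> d k \<noteq> 1"
      proof (intro allI impI)
        fix k assume "k < n" "\<alpha> k \<noteq> 0"
        then have "k \<in> {1..i}" unfolding \<alpha>_def by (simp split: if_splits)
        then have "0 < k" by simp
        then have "d k < 1" using cP(2) \<open>k < n\<close> by blast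
        moreover have "\<bar>d k\<bar> \<le> 1" using cP(3) \<open>k < n\<close> by blast
        ultimately show "\<bar>d k\<bar> \<le> 1 \<and> d k \<noteq> 1" by simp
      qed
      show "(\<Sum>x<n. \<pi> x * (\<Sum>k<n. \<alpha> k * \<phi> k x)) = 0" using mf unfolding f_def .
    qed
    define \<beta> where "\<beta> = (\<lambda>k. ip n \<pi> (\<psi> k) f)"
    define g where "g = (\<lambda>x. \<Sum>k<n. \<beta> k * \<psi> k x)"
    have fg: "\<forall>x<n. f x = g x"
    proof (intro allI impI)
      fix x assume x: "x < n"
      show "f x = g x" unfolding g_def \<beta>_def by (rule orth_expand[OF w onQ x])
    qed
    have \<beta>0: "\<beta> k = 0" if k: "k < i" for k
    proof (cases k)
      case 0
      obtain c where c: "\<forall>x<n. \<psi> 0 x = c" using cQ(5) by blast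
      have "\<beta> k = ip n \<pi> (\<lambda>x. c * 1) f" unfolding \<beta>_def 0 using c by (intro ip_cong) auto
      also have "\<dots> = c * ip n \<pi> (\<lambda>_. 1) f" by (rule ip_scale_left)
      also have "ip n \<pi> (\<lambda>_. 1) f = 0" using mf unfolding ip_def by simp
      finally show ?thesis by simp
    next
      case (Suc x)
      then have x: "x < i - 1" using k by simp
      have "\<beta> k = (\<Sum>j<n. \<alpha> j * ip n \<pi> (\<psi> (Suc x)) (\<phi> j))"
        unfolding \<beta>_def f_def Suc by (rule ip_sum_right)
      also have "\<dots> = (\<Sum>j\<in>{1..i}. a j * ip n \<pi> (\<psi> (Suc x)) (\<phi> j))"
        unfolding \<alpha>_def by (rule sum_restrict_sub[OF sub])
      also have "\<dots> = 0" by (rule a(2)[rule_format, OF x])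
      finally show ?thesis .
    qed
    have mg: "(\<Sum>x<n. \<pi> x * g x) = 0" using mf fg by simp
    have vQ: "asym_var n \<pi> g Q = (\<Sum>k<n. (\<beta> k)^2 * phi (e k))"
      unfolding g_def
    proof (rule asym_formula[OF TQ RQ onQ evQ])
      show "\<forall>k<n. \<beta> k \<noteq> 0 \<longrightarrow> \<bar>e k\<bar> \<le> 1 \<and> e k \<noteq> 1"
      proof (intro allI impI)
        fix k assume "k < n" "\<beta> k \<noteq> 0"
        have "i \<le> k"
        proof (rule ccontr)
          assume "\<not> i \<le> k"
          then have "\<beta> k = 0" using \<beta>0 by simp
          then show False using \<open>\<beta> k \<noteq> 0\<close> by simp
        qed
        then have "0 < k" using i0 by simp
        then have "e k < 1" using cQ(2) \<open>k < n\<close> by blast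
        moreover have "\<bar>e k\<bar> \<le> 1" using cQ(3) \<open>k < n\<close> by blast
        ultimately show "\<bar>e k\<bar> \<le> 1 \<and> e k \<noteq> 1" by simp
      qed
      show "(\<Sum>x<n. \<pi> x * (\<Sum>k<n. \<beta> k * \<psi> k x)) = 0" using mg unfolding g_def .
    qed
    have vQ': "asym_var n \<pi> f Q = (\<Sum>k<n. (\<beta> k)^2 * phi (e k))"
      using asym_var_cong[OF fg] vQ by simp
    have nrm: "(\<Sum>k<n. (\<alpha> k)^2) = (\<Sum>k<n. (\<beta> k)^2)"
    proof -
      have "(\<Sum>k<n. (\<alpha> k)^2) = ip n \<pi> f f" unfolding f_def ip_expand[OF onP] by (simp add: power2_eq_square)
      also have "\<dots> = ip n \<pi> g g" using fg by (intro ip_cong) auto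
      also have "\<dots> = (\<Sum>k<n. (\<beta> k)^2)" unfolding g_def ip_expand[OF onQ] by (simp add: power2_eq_square)
      finally show ?thesis .
    qed
    have Apos: "(\<Sum>k<n. (\<alpha> k)^2) > 0"
    proof -
      from a(1) obtain j where j: "j \<in> {1..i}" "a j \<noteq> 0" by blast
      then have "0 < (\<alpha> j)^2" unfolding \<alpha>_def by simp
      also have "\<dots> \<le> (\<Sum>k<n. (\<alpha> k)^2)" using j sub by (intro member_le_sum) auto
      finally show ?thesis .
    qed
    have dilt: "d i < 1" "e i < 1" using cP(2) cQ(2) i i0 by auto
    have lowP: "phi (d i) * (\<Sum>k<n. (\<alpha> k)^2) \<le> (\<Sum>k<n. (\<alpha> k)^2 * phi (d k))"
      unfolding sum_distrib_left
    proof (rule sum_mono)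
      fix k assume k: "k \<in> {..<n}"
      show "phi (d i) * (\<alpha> k)^2 \<le> (\<alpha> k)^2 * phi (d k)"
      proof (cases "k \<in> {1..i}")
        case True
        then have dik: "d i \<le> d k" using srtP[rule_format, of k i] i by simp
        have dk1: "d k < 1" using cP(2)[rule_format, of k] True i by simp
        have "phi (d i) \<le> phi (d k)" using phi_iff[OF dilt(1) dk1] dik by simp
        then have "phi (d i) * (\<alpha> k)^2 \<le> phi (d k) * (\<alpha> k)^2" by (rule mult_right_mono) simp
        then show ?thesis by (simp add: mult.commute)
      next
        case False
        then have "\<alpha> k = 0" unfolding \<alpha>_def by auto
        then show ?thesis by simp
      qed
    qed
    have upQ: "(\<Sum>k<n. (\<beta> k)^2 * phi (e k)) \<le> phi (e i) * (\<Sum>k<n. (\<beta> k)^2)"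
      unfolding sum_distrib_left
    proof (rule sum_mono)
      fix k assume k: "k \<in> {..<n}"
      show "(\<beta> k)^2 * phi (e k) \<le> phi (e i) * (\<beta> k)^2"
      proof (cases "k < i")
        case False
        then have eki: "e k \<le> e i" using srtQ[rule_format, of i k] k by simp
        have ek1: "e k < 1" using cQ(2)[rule_format, of k] False i0 k by simp
        have "phi (e k) \<le> phi (e i)" using phi_iff[OF ek1 dilt(2)] eki by simp
        then have "phi (e k) * (\<beta> k)^2 \<le> phi (e i) * (\<beta> k)^2" by (rule mult_right_mono) simp
        then show ?thesis by (simp add: mult.commute)
      qed (simp add: \<beta>0)
    qed
    have "asym_var n \<pi> f P \<le> asym_var n \<pi> f Q" using ED unfolding efficiency_dominates_def by blast
    then have "phi (d i) * (\<Sum>k<n. (\<alpha> k)^2) \<le> phi (e i) * (\<Sum>k<n. (\<alpha> k)^2)"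
    proof -
      have X: "phi (e i) * (\<Sum>k<n. (\<beta> k)^2) = phi (e i) * (\<Sum>k<n. (\<alpha> k)^2)" using nrm by simp
      show ?thesis using \<open>asym_var n \<pi> f P \<le> asym_var n \<pi> f Q\<close> lowP upQ vP vQ' X by linarith
    qed
    then have "phi (d i) \<le> phi (e i)" using Apos by simp
    then show ?thesis using phi_iff[OF dilt] by simp
  qed
  have "sorted_eigenvalues P (map d [0..<n])" by (rule sorted_eig[OF Pc onP evP srtP])
  moreover have "sorted_eigenvalues Q (map e [0..<n])" by (rule sorted_eig[OF Qc onQ evQ srtQ])
  moreover have "\<forall>i<length (map d [0..<n]). map d [0..<n] ! i \<le> map e [0..<n] ! i" using dom by simp
  ultimately show ?thesis unfolding eigen_dominates_def by blast
qed


end
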